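(* Let $P$ be a finite poset. Consider the following (nondeterministic) algorithm: set $P_0:=P$; at step $m$, if $P_m$ contains an $N$, choose some $N$ in $P_m$ and let $P_{m+1}$ be obtained from $P_m$ by adding one dummy vertex on the diagonal edge of that $N$; stop when $P_m$ is $N$-free. Then, whatever choices are made, the algorithm stops, and it stops on $S_N(S_N(P))$, which is the smallest $N$-free poset obtained as a barycentric subdivision of $\mathrm{Diag}(P)$. Hence the resulting poset and the number of steps do not depend on the choices of diagonal edges made at each step.
   Context: For a poset $P$, a covering pair is a pair $(x,y)$ with $x<y$ and no $z$ with $x<z<y$; we write $x\prec y$. $\mathrm{Diag}(P)$ is the directed graph on $P$ whose edges are the covering pairs. $\mathrm{Inc}(P)$ is the set of pairs of incomparable elements. Four elements $a,b,c,d$ of $P$ form an $N$ in $P$ if $b\prec c$, $a\prec c$, $b\prec d$ and $(a,d)\in\mathrm{Inc}(P)$; the pair $(b,c)$ is then the diagonal edge of this $N$. $P$ is $N$-free if it contains no $N$. $N_{diag}(P)$ denotes the set of diagonal edges of all $N$'s in $P$. Adding a dummy vertex $u$ on a covering pair $(x,y)$ means adding a new element $u$ with $x\prec u\prec y$ and taking the induced (transitive) order. A barycentric subdivision of $\mathrm{Diag}(P)$ consists of adding finitely many (possibly zero) new vertices on each edge of $\mathrm{Diag}(P)$. $S_N(P)$ is the poset obtained from $P$ by adding one dummy vertex on each edge of $N_{diag}(P)$. *)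

theory Defs
  imports Main
begin

text \<open>A poset is represented by its carrier set together with its order relation
  (x \<le> y), only the restriction to the carrier being relevant.\<close>
type_synonym 'a poset = "'a set \<times> ('a \<Rightarrow> 'a \<Rightarrow> bool)"

fun is_poset :: "'a poset \<Rightarrow> bool" where
  "is_poset (A, le) =
     ((\<forall>x\<in>A. le x x) \<and>
      (\<forall>x\<in>A. \<forall>y\<in>A. le x y \<and> le y x \<longrightarrow> x = y) \<and>
      (\<forall>x\<in>A. \<forall>y\<in>A. \<forall>z\<in>A. le x y \<and> le y z \<longrightarrow> le x z))"

fun plt :: "'a poset \<Rightarrow> 'a \<Rightarrow> 'a \<Rightarrow> bool" where
  "plt (A, le) x y = (x \<in> A \<and> y \<in> A \<and> le x y \<and> x \<noteq> y)"

fun covers :: "'a poset \<Rightarrow> 'a \<Rightarrow> 'a \<Rightarrow> bool" where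
  "covers (A, le) x y =
     (plt (A, le) x y \<and> \<not> (\<exists>z\<in>A. plt (A, le) x z \<and> plt (A, le) z y))"

fun incomp :: "'a poset \<Rightarrow> 'a \<Rightarrow> 'a \<Rightarrow> bool" where
  "incomp (A, le) x y = (x \<in> A \<and> y \<in> A \<and> \<not> le x y \<and> \<not> le y x)"

definition is_N :: "'a poset \<Rightarrow> 'a \<Rightarrow> 'a \<Rightarrow> 'a \<Rightarrow> 'a \<Rightarrow> bool" where
  "is_N P a b c d =
     (covers P b c \<and> covers P a c \<and> covers P b d \<and> incomp P a d)"

definition N_free :: "'a poset \<Rightarrow> bool" where
  "N_free P = (\<not> (\<exists>a b c d. is_N P a b c d))"

definition N_diag :: "'a poset \<Rightarrow> ('a \<times> 'a) set" where
  "N_diag P = {(b, c). \<exists>a d. is_N P a b c d}"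

fun add_dummy :: "'a poset \<Rightarrow> 'a \<Rightarrow> 'a \<Rightarrow> 'a \<Rightarrow> 'a poset" where
  "add_dummy (A, le) x y u =
     (insert u A,
      (\<lambda>p q. (p \<in> A \<and> q \<in> A \<and> le p q) \<or> (p = x \<and> q = u) \<or> (p = u \<and> q = y))\<^sup>*\<^sup>*)"

definition alg_step :: "'a poset \<Rightarrow> 'a poset \<Rightarrow> bool" where
  "alg_step P Q =
     (\<exists>a b c d u. is_N P a b c d \<and> u \<notin> fst P \<and> Q = add_dummy P b c u)"

definition complete_run :: "'a poset \<Rightarrow> 'a poset list \<Rightarrow> bool" where
  "complete_run P Ps =
     (Ps \<noteq> [] \<and> hd Ps = P \<and>
      (\<forall>i. Suc i < length Ps \<longrightarrow> alg_step (Ps ! i) (Ps ! Suc i)) \<and>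
      N_free (last Ps))"

text \<open>Barycentric subdivision of Diag(P) with k(x,y) new vertices on the edge (x,y):
  new vertices Inr (x,y,i), 1 \<le> i \<le> k(x,y), forming the chain
  x \<prec> (x,y,1) \<prec> ... \<prec> (x,y,k(x,y)) \<prec> y; the order is the induced one.\<close>
fun subdiv_base :: "'a poset \<Rightarrow> ('a \<times> 'a \<Rightarrow> nat) \<Rightarrow>
    'a + ('a \<times> 'a \<times> nat) \<Rightarrow> 'a + ('a \<times> 'a \<times> nat) \<Rightarrow> bool" where
  "subdiv_base (A, le) k p q =
     ((\<exists>x y. p = Inl x \<and> q = Inl y \<and> x \<in> A \<and> y \<in> A \<and> le x y) \<or>
      (\<exists>x y. covers (A, le) x y \<and> 1 \<le> k (x, y) \<and>
         ((p = Inl x \<and> q = Inr (x, y, 1)) \<or>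
          (\<exists>i. 1 \<le> i \<and> i < k (x, y) \<and> p = Inr (x, y, i) \<and> q = Inr (x, y, Suc i)) \<or>
          (p = Inr (x, y, k (x, y)) \<and> q = Inl y))))"

fun subdiv :: "'a poset \<Rightarrow> ('a \<times> 'a \<Rightarrow> nat) \<Rightarrow> ('a + ('a \<times> 'a \<times> nat)) poset" where
  "subdiv (A, le) k =
     (Inl ` A \<union> {Inr (x, y, i) | x y i. covers (A, le) x y \<and> 1 \<le> i \<and> i \<le> k (x, y)},
      (subdiv_base (A, le) k)\<^sup>*\<^sup>*)"

definition SN :: "'a poset \<Rightarrow> ('a + ('a \<times> 'a \<times> nat)) poset" where
  "SN P = subdiv P (\<lambda>e. if e \<in> N_diag P then 1 else 0)"

definition poset_iso :: "'a poset \<Rightarrow> 'b poset \<Rightarrow> bool" where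
  "poset_iso P Q =
     (\<exists>f. bij_betw f (fst P) (fst Q) \<and>
          (\<forall>x\<in>fst P. \<forall>y\<in>fst P. snd P x y \<longleftrightarrow> snd Q (f x) (f y)))"

end

theory Submission
  imports Defs
begin

definition bad :: "'a poset \<Rightarrow> ('a \<times> 'a) set \<Rightarrow> ('a \<times> 'a) set" where
  "bad P K = {(b, c). covers P b c \<and> (b, c) \<notin> K \<and>
     (\<exists>a d. covers P a c \<and> covers P b d \<and> a \<noteq> b \<and> d \<noteq> c \<and>
        (incomp P a d \<or> (a, c) \<in> K \<or> (b, d) \<in> K))}"

definition ind :: "('a \<times> 'a) set \<Rightarrow> ('a \<times> 'a \<Rightarrow> nat)" where
  "ind K = (\<lambda>e. if e \<in> K then 1 else 0)"

declare covers.simps[simp del]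

lemma covers_eq: "covers (A, le) x y \<longleftrightarrow> x \<in> A \<and> y \<in> A \<and> le x y \<and> x \<noteq> y \<and>
   \<not>(\<exists>z\<in>A. le x z \<and> x \<noteq> z \<and> le z y \<and> z \<noteq> y)"
  by (auto simp: covers.simps)

locale fposet =
  fixes A :: "'a set" and le :: "'a \<Rightarrow> 'a \<Rightarrow> bool"
  assumes refl: "x \<in> A \<Longrightarrow> le x x"
    and antisym: "x \<in> A \<Longrightarrow> y \<in> A \<Longrightarrow> le x y \<Longrightarrow> le y x \<Longrightarrow> x = y"
    and trans: "x \<in> A \<Longrightarrow> y \<in> A \<Longrightarrow> z \<in> A \<Longrightarrow> le x y \<Longrightarrow> le y z \<Longrightarrow> le x z"
    and fin: "finite A"
begin

abbreviation "cv \<equiv> covers (A, le)"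
abbreviation "K1 \<equiv> bad (A, le) {}"
abbreviation "K0 \<equiv> K1 \<union> bad (A, le) K1"

lemma cv_def: "cv x y \<longleftrightarrow> x \<in> A \<and> y \<in> A \<and> le x y \<and> x \<noteq> y \<and>
   \<not>(\<exists>z\<in>A. le x z \<and> x \<noteq> z \<and> le z y \<and> z \<noteq> y)"
  by (rule covers_eq)

lemma cvD: "cv x y \<Longrightarrow> x \<in> A \<and> y \<in> A \<and> le x y \<and> x \<noteq> y"
  by (auto simp: cv_def)

lemma inc_def: "incomp (A, le) x y \<longleftrightarrow> x \<in> A \<and> y \<in> A \<and> \<not> le x y \<and> \<not> le y x"
  by simp

lemma mem_bad: "(b, c) \<in> bad (A, le) K \<longleftrightarrow> cv b c \<and> (b, c) \<notin> K \<and>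
     (\<exists>a d. cv a c \<and> cv b d \<and> a \<noteq> b \<and> d \<noteq> c \<and>
        (incomp (A, le) a d \<or> (a, c) \<in> K \<or> (b, d) \<in> K))"
  by (simp add: bad_def)

lemma cover_above:
  assumes "x \<in> A" "z \<in> A" "le x z" "x \<noteq> z"
  shows "\<exists>d. cv x d \<and> le d z"
proof -
  define B where "B w = {v \<in> A. le x v \<and> x \<noteq> v \<and> le v w \<and> v \<noteq> w}" for w
  have "\<forall>z. z \<in> A \<longrightarrow> le x z \<longrightarrow> x \<noteq> z \<longrightarrow> card (B z) = n \<longrightarrow> (\<exists>d. cv x d \<and> le d z)" for n
  proof (induction n rule: less_induct)
    case (less n)
    show ?case
    proof (intro allI impI)
      fix z assume z: "z \<in> A" "le x z" "x \<noteq> z" "card (B z) = n"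
      show "\<exists>d. cv x d \<and> le d z"
      proof (cases "cv x z")
        case True then show ?thesis using z refl by blast
      next
        case False
        then obtain v where v: "v \<in> A" "le x v" "x \<noteq> v" "le v z" "v \<noteq> z"
          using z assms(1) False unfolding cv_def by auto
        have sub1: "B v \<subseteq> B z"
        proof
          fix w assume w: "w \<in> B v"
          then have w': "w \<in> A" "le x w" "x \<noteq> w" "le w v" "w \<noteq> v" by (auto simp: B_def)
          have "le w z" using trans[OF w'(1) v(1) z(1) w'(4) v(4)] .
          moreover have "w \<noteq> z" using antisym[OF v(1) w'(1)] w' v by auto
          ultimately show "w \<in> B z" using w' by (auto simp: B_def)
        qed
        have "v \<in> B z" "v \<notin> B v" using v by (auto simp: B_def)
        then have "B v \<subset> B z" using sub1 by blast
        then have "card (B v) < card (B z)"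
          by (intro psubset_card_mono) (auto simp: B_def fin)
        then obtain d where d: "cv x d" "le d v" using less z v by auto
        have "d \<in> A" using d by (auto dest: cvD)
        then have "le d z" using trans[OF _ v(1) z(1) d(2) v(4)] by blast
        then show ?thesis using d by blast
      qed
    qed
  qed
  then show ?thesis using assms by blast
qed

lemma wit_imp:
  assumes "cv b c" "cv a c" "cv b d" "d \<noteq> c" "le d a"
  shows False
proof -
  have "d \<in> A" "a \<in> A" "c \<in> A" "le a c" "le b d" "b \<noteq> d" using assms by (auto dest: cvD)
  then have "le d c" using trans assms(5) by blast
  then show False using assms \<open>d \<in> A\<close> \<open>le b d\<close> \<open>b \<noteq> d\<close> unfolding cv_def by auto
qed

lemma not_between:
  assumes "cv x y" "z \<in> A" "le x z" "x \<noteq> z" "le z y" "z \<noteq> y"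
  shows False
  using assms unfolding cv_def by blast

lemma lemma1:
  assumes ac: "cv a c" and bc: "cv b c" and ad: "cv a d2" and "a \<noteq> b" "d2 \<noteq> c"
    and nac: "(a, c) \<notin> K1" and nbc: "(b, c) \<notin> K1"
  shows "cv b d2"
proof -
  have A: "a \<in> A" "b \<in> A" "c \<in> A" "d2 \<in> A" using assms by (auto dest: cvD)
  have "\<not> incomp (A, le) b d2" using assms by (auto simp: mem_bad)
  then have "le b d2 \<or> le d2 b" using A by auto
  moreover have "\<not> le d2 b" using wit_imp[OF ac bc ad \<open>d2 \<noteq> c\<close>] by blast
  ultimately have bd: "le b d2" by blast
  have bd2: "b \<noteq> d2"
  proof
    assume "b = d2"
    then show False using not_between[OF ac, of b] ad bc A by (auto dest: cvD)
  qed
  have "\<not>(\<exists>z\<in>A. le b z \<and> b \<noteq> z \<and> le z d2 \<and> z \<noteq> d2)"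
  proof
    assume "\<exists>z\<in>A. le b z \<and> b \<noteq> z \<and> le z d2 \<and> z \<noteq> d2"
    then obtain z where z: "z \<in> A" "le b z" "b \<noteq> z" "le z d2" "z \<noteq> d2" by blast
    obtain d' where d': "cv b d'" "le d' z" using cover_above[OF A(2) z(1-3)] by blast
    have d'A: "d' \<in> A" using d' by (auto dest: cvD)
    have "d' \<noteq> c"
    proof
      assume "d' = c"
      then have "le c z" using d' by simp
      then have "le c d2" using trans[OF A(3) z(1) A(4)] z by blast
      moreover have "c \<noteq> d2" using assms by blast
      ultimately show False using not_between[OF ad A(3)] ac by (auto dest: cvD)
    qed
    then have "\<not> incomp (A, le) a d'" using nbc bc d' ac \<open>a \<noteq> b\<close> by (auto simp: mem_bad)
    then have "le a d' \<or> le d' a" using A d'A by auto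
    moreover have "\<not> le d' a" using wit_imp[OF bc ac d'(1) \<open>d' \<noteq> c\<close>] by blast
    ultimately have "le a d'" by blast
    then have az: "le a z" using trans[OF A(1) d'A z(1)] d' by blast
    have "a \<noteq> z"
    proof
      assume "a = z"
      then have "le d' a" using d' by simp
      then show False using wit_imp[OF bc ac d'(1) \<open>d' \<noteq> c\<close>] by blast
    qed
    then show False using not_between[OF ad z(1) az] z by blast
  qed
  then show ?thesis using A bd bd2 unfolding cv_def by auto
qed

lemma lemma2:
  assumes ac: "cv a c" and bc: "cv b c" and ad: "cv a d2" and bd: "cv b d2"
    and ab: "a \<noteq> b" and dc: "d2 \<noteq> c"
    and nac: "(a, c) \<notin> K1" and iad: "(a, d2) \<in> K1"
  shows "(b, d2) \<in> K1"
proof -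
  have A: "a \<in> A" "b \<in> A" "c \<in> A" "d2 \<in> A" using assms by (auto dest: cvD)
  obtain x y where xy: "cv x d2" "cv a y" "x \<noteq> a" "y \<noteq> d2" "incomp (A, le) x y"
    using iad by (auto simp: mem_bad)
  have xyA: "x \<in> A" "y \<in> A" using xy by (auto dest: cvD)
  show ?thesis
  proof (cases "x = b")
    case True
    have "y \<noteq> c" using xy True bc by (auto dest: cvD)
    then have "(a, c) \<in> K1" using ac bc xy True ab by (auto simp: mem_bad)
    then show ?thesis using nac by blast
  next
    case xb: False
    show ?thesis
    proof (cases "y = c")
      case True
      then show ?thesis using bd xy xb bc dc by (auto simp: mem_bad)
    next
      case yc: False
      have "\<not> incomp (A, le) b y" using nac ac bc xy yc ab by (auto simp: mem_bad)
      then have "le b y \<or> le y b" using A xyA by auto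
      moreover have "\<not> le y b" using wit_imp[OF ac bc xy(2) yc] by blast
      ultimately have by': "le b y" by blast
      have "b \<noteq> y"
      proof
        assume "b = y"
        then show False using not_between[OF ac A(2)] bc xy by (auto dest: cvD)
      qed
      obtain d' where d': "cv b d'" "le d' y" using cover_above[OF A(2) xyA(2) by' \<open>b \<noteq> y\<close>] by blast
      have d'A: "d' \<in> A" using d' by (auto dest: cvD)
      have "d' \<noteq> d2"
      proof
        assume "d' = d2"
        then have "le d2 y" using d' by simp
        moreover have "d2 \<noteq> y" using xy by blast
        ultimately show False using not_between[OF xy(2) A(4)] ad by (auto dest: cvD)
      qed
      have "incomp (A, le) x d'"
      proof -
        have "\<not> le x d'"
        proof
          assume "le x d'"
          then have "le x y" using trans[OF xyA(1) d'A xyA(2)] d' by blast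
          then show False using xy by auto
        qed
        moreover have "\<not> le d' x"
        proof
          assume dx: "le d' x"
          have "d' \<noteq> x" using xy d' by auto
          have "le d' d2" using trans[OF d'A xyA(1) A(4) dx] xy by (auto dest: cvD)
          then show False using not_between[OF bd d'A] d' \<open>d' \<noteq> d2\<close> by (auto dest: cvD)
        qed
        ultimately show ?thesis using xyA d'A by auto
      qed
      then show ?thesis using bd xy xb d' \<open>d' \<noteq> d2\<close> by (auto simp: mem_bad)
    qed
  qed
qed

lemma flip: "fposet A (\<lambda>x y. le y x)"
  by unfold_locales (auto intro: refl antisym trans fin)

lemma flip_cv: "covers (A, \<lambda>x y. le y x) x y \<longleftrightarrow> cv y x"
  unfolding covers_eq by auto

lemma flip_inc: "incomp (A, \<lambda>x y. le y x) x y \<longleftrightarrow> incomp (A, le) y x"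
  by auto

lemma flip_K1: "(x, y) \<in> bad (A, \<lambda>x y. le y x) {} \<longleftrightarrow> (y, x) \<in> K1"
  unfolding bad_def flip_cv flip_inc by auto

lemma lemma1':
  assumes "cv b d" "cv b c" "cv a2 d" "c \<noteq> d" "a2 \<noteq> b" "(b, d) \<notin> K1" "(b, c) \<notin> K1"
  shows "cv a2 c"
  using fposet.lemma1[OF flip, of d b c a2] assms unfolding flip_cv flip_K1 by blast

lemma lemma2':
  assumes "cv b d" "cv b c" "cv a2 d" "cv a2 c" "c \<noteq> d" "a2 \<noteq> b" "(b, d) \<notin> K1" "(a2, d) \<in> K1"
  shows "(a2, c) \<in> K1"
  using fposet.lemma2[OF flip, of d b c a2] assms unfolding flip_cv flip_K1 by blast

lemma closed: "bad (A, le) K0 = {}"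
proof (rule ccontr)
  assume "bad (A, le) K0 \<noteq> {}"
  then obtain b c where bc0: "(b, c) \<in> bad (A, le) K0" by auto
  then obtain a d where bc: "cv b c" and nK0: "(b, c) \<notin> K0" and ad: "cv a c" "cv b d" "a \<noteq> b" "d \<noteq> c"
    and alt: "incomp (A, le) a d \<or> (a, c) \<in> K0 \<or> (b, d) \<in> K0"
    unfolding mem_bad by blast
  have nK1: "(b, c) \<notin> K1" and nbK1: "(b, c) \<notin> bad (A, le) K1" using nK0 by auto
  have inK1: "(b, c) \<in> bad (A, le) K1" if "(a', c) \<in> K1 \<or> (b, d') \<in> K1" "cv a' c" "cv b d'" "a' \<noteq> b" "d' \<noteq> c" for a' d'
    using that bc nK1 unfolding mem_bad by blast
  consider "incomp (A, le) a d" | "(a, c) \<in> K1" | "(b, d) \<in> K1"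
    | "(a, c) \<in> bad (A, le) K1" "(a, c) \<notin> K1" | "(b, d) \<in> bad (A, le) K1" "(b, d) \<notin> K1"
    using alt by blast
  then show False
  proof cases
    case 1
    then have "(b, c) \<in> K1" using bc ad unfolding mem_bad by blast
    then show False using nK1 by blast
  next
    case 2 then show False using inK1[of a d] ad nbK1 by blast
  next
    case 3 then show False using inK1[of a d] ad nbK1 by blast
  next
    case 4
    then obtain a2 d2 where w: "cv a2 c" "cv a d2" "a2 \<noteq> a" "d2 \<noteq> c"
      and alt2: "incomp (A, le) a2 d2 \<or> (a2, c) \<in> K1 \<or> (a, d2) \<in> K1"
      unfolding mem_bad by blast
    consider "incomp (A, le) a2 d2" | "(a2, c) \<in> K1" | "(a, d2) \<in> K1" using alt2 by blast
    then show False
    proof cases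
      case 1
      then have "(a, c) \<in> K1" using w ad unfolding mem_bad by blast
      then show False using 4 by blast
    next
      case 2
      show False
      proof (cases "a2 = b")
        case True then show False using 2 nK1 by blast
      next
        case False then show False using inK1[of a2 d] 2 w ad nbK1 by blast
      qed
    next
      case 3
      have "cv b d2" using lemma1[OF ad(1) bc w(2) ad(3) w(4) 4(2) nK1] .
      then have "(b, d2) \<in> K1" using lemma2[OF ad(1) bc w(2) _ ad(3) w(4) 4(2) 3] by blast
      then show False using inK1[of a d2] ad w \<open>cv b d2\<close> nbK1 by blast
    qed
  next
    case 5
    then obtain a2 d2 where w: "cv a2 d" "cv b d2" "a2 \<noteq> b" "d2 \<noteq> d"
      and alt2: "incomp (A, le) a2 d2 \<or> (a2, d) \<in> K1 \<or> (b, d2) \<in> K1"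
      unfolding mem_bad by blast
    consider "incomp (A, le) a2 d2" | "(a2, d) \<in> K1" | "(b, d2) \<in> K1" using alt2 by blast
    then show False
    proof cases
      case 1
      then have "(b, d) \<in> K1" using w ad unfolding mem_bad by blast
      then show False using 5 by blast
    next
      case 3
      show False
      proof (cases "d2 = c")
        case True then show False using 3 nK1 by blast
      next
        case False
        have "(b, c) \<in> bad (A, le) K1"
          using inK1[of a d2] 3 w ad False by blast
        then show False using nbK1 by blast
      qed
    next
      case 2
      have "cv a2 c" using lemma1'[OF ad(2) bc w(1) ad(4)[symmetric] w(3) 5(2) nK1] .
      then have "(a2, c) \<in> K1" using lemma2'[OF ad(2) bc w(1) _ ad(4)[symmetric] w(3) 5(2) 2] by blast
      then show False using inK1[of a2 d] ad w \<open>cv a2 c\<close> nbK1 by blast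
    qed
  qed
qed

lemma minimal: "bad (A, le) K = {} \<Longrightarrow> K0 \<subseteq> K"
proof -
  assume bK: "bad (A, le) K = {}"
  have k1: "(x, y) \<in> K" if "(x, y) \<in> K1" for x y
  proof (rule ccontr)
    assume "(x, y) \<notin> K"
    then have "(x, y) \<in> bad (A, le) K" using that unfolding mem_bad by blast
    then show False using bK by blast
  qed
  have "(x, y) \<in> K" if "(x, y) \<in> K0" for x y
  proof (rule ccontr)
    assume n: "(x, y) \<notin> K"
    have "(x, y) \<in> bad (A, le) K"
    proof (cases "(x, y) \<in> K1")
      case True then show ?thesis using k1 n by blast
    next
      case False
      then have "(x, y) \<in> bad (A, le) K1" using that by blast
      then show ?thesis using n k1 unfolding mem_bad by blast
    qed
    then show False using bK by blast
  qed
  then show ?thesis by auto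
qed

lemma mono_bad1: "K \<subseteq> K0 \<Longrightarrow> (b, c) \<in> bad (A, le) K \<Longrightarrow> (b, c) \<in> K0"
proof (rule ccontr)
  assume K: "K \<subseteq> K0" and e: "(b, c) \<in> bad (A, le) K" and n: "(b, c) \<notin> K0"
  then have "(b, c) \<in> bad (A, le) K0" using e K unfolding mem_bad by blast
  then show False using closed by blast
qed

lemma mono_bad: "K \<subseteq> K0 \<Longrightarrow> bad (A, le) K \<subseteq> K0"
  using mono_bad1 by auto

lemma K0_cov: "(x, y) \<in> K0 \<Longrightarrow> cv x y"
  by (auto simp: mem_bad)

lemma Ndiag_K1: "N_diag (A, le) = K1"
proof -
  have "is_N (A, le) a b c d \<longleftrightarrow> cv b c \<and> cv a c \<and> cv b d \<and> incomp (A, le) a d" for a b c d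
    by (simp add: is_N_def)
  moreover have "incomp (A, le) a d \<Longrightarrow> cv b d \<Longrightarrow> a \<noteq> b" for a b d by (auto dest: cvD)
  moreover have "incomp (A, le) a d \<Longrightarrow> cv a c \<Longrightarrow> d \<noteq> c" for a c d by (auto dest: cvD)
  ultimately show ?thesis unfolding N_diag_def bad_def by blast
qed

end

fun leS :: "('a \<Rightarrow> 'a \<Rightarrow> bool) \<Rightarrow> 'a + ('a \<times> 'a \<times> nat) \<Rightarrow> 'a + ('a \<times> 'a \<times> nat) \<Rightarrow> bool" where
  "leS le (Inl x) (Inl y) = le x y"
| "leS le (Inl x) (Inr (a, b, i)) = le x a"
| "leS le (Inr (a, b, i)) (Inl y) = le b y"
| "leS le (Inr (a, b, i)) (Inr (a', b', j)) = ((a = a' \<and> b = b' \<and> i \<le> j) \<or> le b a')"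

definition Cs :: "'a set \<Rightarrow> ('a \<Rightarrow> 'a \<Rightarrow> bool) \<Rightarrow> ('a \<times> 'a \<Rightarrow> nat) \<Rightarrow> ('a + ('a \<times> 'a \<times> nat)) set" where
  "Cs A le k = Inl ` A \<union> {Inr (x, y, i) | x y i. covers (A, le) x y \<and> 1 \<le> i \<and> i \<le> k (x, y)}"

context fposet
begin

abbreviation "R k \<equiv> subdiv_base (A, le) k"
abbreviation "C k \<equiv> Cs A le k"

lemma subdiv_eq: "subdiv (A, le) k = (C k, (R k)\<^sup>*\<^sup>*)"
  by (simp add: Cs_def)

lemma Cs_Inl[simp]: "Inl x \<in> C k \<longleftrightarrow> x \<in> A"
  by (auto simp: Cs_def)

lemma Cs_Inr[simp]: "Inr (x, y, i) \<in> C k \<longleftrightarrow> cv x y \<and> 1 \<le> i \<and> i \<le> k (x, y)"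
  by (auto simp: Cs_def)

lemma chain:
  assumes "cv x y" "1 \<le> i" "i \<le> j" "j \<le> k (x, y)"
  shows "(R k)\<^sup>*\<^sup>* (Inr (x, y, i)) (Inr (x, y, j))"
  using assms(3,4)
proof (induction j rule: dec_induct)
  case base then show ?case by simp
next
  case (step j)
  have "R k (Inr (x, y, j)) (Inr (x, y, Suc j))"
    using assms step by auto
  then show ?case using step by (meson Suc_leD rtranclp.rtrancl_into_rtrancl)
qed

lemma chain_up:
  assumes "cv x y" "1 \<le> i" "i \<le> k (x, y)"
  shows "(R k)\<^sup>*\<^sup>* (Inr (x, y, i)) (Inl y)"
proof -
  have "(R k)\<^sup>*\<^sup>* (Inr (x, y, i)) (Inr (x, y, k (x, y)))" using chain assms by simp
  moreover have "R k (Inr (x, y, k (x, y))) (Inl y)" using assms by auto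
  ultimately show ?thesis by (meson rtranclp.rtrancl_into_rtrancl)
qed

lemma chain_down:
  assumes "cv x y" "1 \<le> i" "i \<le> k (x, y)"
  shows "(R k)\<^sup>*\<^sup>* (Inl x) (Inr (x, y, i))"
proof -
  have "R k (Inl x) (Inr (x, y, 1))" using assms by auto
  moreover have "(R k)\<^sup>*\<^sup>* (Inr (x, y, 1)) (Inr (x, y, i))" using chain assms by simp
  ultimately show ?thesis by (meson converse_rtranclp_into_rtranclp)
qed

lemma base_Inl: "x \<in> A \<Longrightarrow> y \<in> A \<Longrightarrow> le x y \<Longrightarrow> (R k)\<^sup>*\<^sup>* (Inl x) (Inl y)"
  by (intro r_into_rtranclp) auto

lemma leS_refl: "p \<in> C k \<Longrightarrow> leS le p p"
  by (cases p) (auto simp: refl)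

lemma Inr_facts: "Inr (a, b, i) \<in> C k \<Longrightarrow> a \<in> A \<and> b \<in> A \<and> le a b \<and> a \<noteq> b"
  using cvD by auto

lemma leS_trans:
  assumes "p \<in> C k" "q \<in> C k" "r \<in> C k" "leS le p q" "leS le q r"
  shows "leS le p r"
proof (cases p)
  case (Inl x)
  have xA: "x \<in> A" using assms Inl by simp
  show ?thesis
  proof (cases q)
    case (Inl y)
    have yA: "y \<in> A" using assms Inl by simp
    show ?thesis
    proof (cases r)
      case (Inl z)
      have "z \<in> A" using assms Inl by simp
      then show ?thesis using assms \<open>p = Inl x\<close> \<open>q = Inl y\<close> Inl xA yA trans[of x y z] by simp
    next
      case (Inr t) then obtain a b i where t: "t = (a, b, i)" by (cases t)
      have "a \<in> A" using assms Inr t Inr_facts by blast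
      then show ?thesis using assms \<open>p = Inl x\<close> \<open>q = Inl y\<close> Inr t xA yA trans[of x y a] by simp
    qed
  next
    case (Inr t) then obtain a b i where t: "t = (a, b, i)" by (cases t)
    have ab: "a \<in> A" "b \<in> A" "le a b" using assms Inr t Inr_facts by blast+
    have xa: "le x a" using assms Inl Inr t by simp
    have xb: "le x b" using trans[OF xA ab(1,2) xa ab(3)] .
    show ?thesis
    proof (cases r)
      case (Inl z)
      have "z \<in> A" "le b z" using assms Inl \<open>q = Inr t\<close> t by simp_all
      then show ?thesis using \<open>p = Inl x\<close> Inl trans[OF xA ab(2) _ xb] by simp
    next
      case (Inr t') then obtain a' b' j where t': "t' = (a', b', j)" by (cases t')
      have a'A: "a' \<in> A" using assms Inr t' Inr_facts by blast
      have "(a = a' \<and> b = b' \<and> i \<le> j) \<or> le b a'" using assms \<open>q = Inr t\<close> t Inr t' by simp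
      then have "le x a'" using xa xb trans[OF xA ab(2) a'A xb] by auto
      then show ?thesis using \<open>p = Inl x\<close> Inr t' by simp
    qed
  qed
next
  case (Inr s) then obtain a0 b0 i0 where s: "s = (a0, b0, i0)" by (cases s)
  have ab0: "a0 \<in> A" "b0 \<in> A" "le a0 b0" using assms Inr s Inr_facts by blast+
  show ?thesis
  proof (cases q)
    case (Inl y)
    have yA: "y \<in> A" using assms Inl by simp
    have by': "le b0 y" using assms \<open>p = Inr s\<close> s Inl by simp
    show ?thesis
    proof (cases r)
      case (Inl z)
      have "z \<in> A" "le y z" using assms Inl \<open>q = Inl y\<close> by simp_all
      then show ?thesis using \<open>p = Inr s\<close> s Inl trans[OF ab0(2) yA _ by'] by simp
    next
      case (Inr t) then obtain a b i where t: "t = (a, b, i)" by (cases t)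
      have "a \<in> A" "le y a" using assms Inr t Inr_facts \<open>q = Inl y\<close> by auto
      then show ?thesis using \<open>p = Inr s\<close> s Inr t trans[OF ab0(2) yA _ by'] by simp
    qed
  next
    case (Inr t) then obtain a b i where t: "t = (a, b, i)" by (cases t)
    have ab: "a \<in> A" "b \<in> A" "le a b" using assms Inr t Inr_facts by blast+
    have pq: "(a0 = a \<and> b0 = b \<and> i0 \<le> i) \<or> le b0 a" using assms \<open>p = Inr s\<close> s Inr t by simp
    have b0b: "le b0 b \<or> (b0 = b)" using pq trans[OF ab0(2) ab(1) ab(2) _ ab(3)] by auto
    show ?thesis
    proof (cases r)
      case (Inl z)
      have z: "z \<in> A" "le b z" using assms Inl \<open>q = Inr t\<close> t by simp_all
      have "le b0 z" using b0b z trans[OF ab0(2) ab(2) z(1)] by auto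
      then show ?thesis using \<open>p = Inr s\<close> s Inl by simp
    next
      case (Inr t') then obtain a' b' j where t': "t' = (a', b', j)" by (cases t')
      have a'A: "a' \<in> A" using assms Inr t' Inr_facts by blast
      have qr: "(a = a' \<and> b = b' \<and> i \<le> j) \<or> le b a'" using assms \<open>q = Inr t\<close> t Inr t' by simp
      have "(a0 = a' \<and> b0 = b' \<and> i0 \<le> j) \<or> le b0 a'"
      proof (cases "a0 = a \<and> b0 = b \<and> i0 \<le> i")
        case True
        then show ?thesis using qr by auto
      next
        case False
        then have "le b0 a" using pq by blast
        then show ?thesis using qr trans[OF ab0(2) ab(1) a'A] trans[OF ab0(2) ab(2) a'A] b0b by auto
      qed
      then show ?thesis using \<open>p = Inr s\<close> s Inr t' by simp
    qed
  qed
qed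

lemma base_leS:
  assumes "R k p q" shows "p \<in> C k \<and> q \<in> C k \<and> leS le p q"
proof -
  from assms consider (a) x y where "p = Inl x" "q = Inl y" "x \<in> A" "y \<in> A" "le x y"
    | (b) x y where "cv x y" "1 \<le> k (x, y)" "p = Inl x" "q = Inr (x, y, 1)"
    | (c) x y i where "cv x y" "1 \<le> i" "i < k (x, y)" "p = Inr (x, y, i)" "q = Inr (x, y, Suc i)"
    | (d) x y where "cv x y" "1 \<le> k (x, y)" "p = Inr (x, y, k (x, y))" "q = Inl y"
    by (simp only: subdiv_base.simps) blast
  then show ?thesis
  proof cases
    case a then show ?thesis by simp
  next
    case b then show ?thesis using cvD[of x y] refl[of x] by simp
  next
    case c then show ?thesis by simp
  next
    case d then show ?thesis using cvD[of x y] refl[of y] by simp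
  qed
qed

lemma rtr_leS: "(R k)\<^sup>*\<^sup>* p q \<Longrightarrow> p = q \<or> (p \<in> C k \<and> q \<in> C k \<and> leS le p q)"
proof (induction rule: rtranclp_induct)
  case base then show ?case by simp
next
  case (step y z)
  have yz: "y \<in> C k" "z \<in> C k" "leS le y z" using base_leS[OF step(2)] by blast+
  show ?case
  proof (cases "p = y")
    case True then show ?thesis using yz by blast
  next
    case False
    then have "p \<in> C k" "leS le p y" using step(3) by blast+
    then show ?thesis using leS_trans[where p = p and q = y and r = z and k = k] yz by blast
  qed
qed

lemma leS_rtr:
  assumes pC: "p \<in> C k" and qC: "q \<in> C k" and pq: "leS le p q"
  shows "(R k)\<^sup>*\<^sup>* p q"
proof (cases p)
  case (Inl x)
  have xA: "x \<in> A" using pC Inl by simp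
  show ?thesis
  proof (cases q)
    case (Inl y)
    have "y \<in> A" "le x y" using qC pq \<open>p = Inl x\<close> Inl by simp_all
    then show ?thesis using \<open>p = Inl x\<close> Inl base_Inl xA by simp
  next
    case (Inr t) then obtain a b i where t: "t = (a, b, i)" by (cases t)
    have ab: "cv a b" "1 \<le> i" "i \<le> k (a, b)" using qC Inr t by simp_all
    have xa: "le x a" using pq \<open>p = Inl x\<close> Inr t by simp
    have "(R k)\<^sup>*\<^sup>* (Inl x) (Inl a)" using base_Inl[OF xA _ xa] cvD[OF ab(1)] by blast
    moreover have "(R k)\<^sup>*\<^sup>* (Inl a) (Inr (a, b, i))" using chain_down[where x=a and y=b and i=i and k=k, OF ab] .
    ultimately show ?thesis using \<open>p = Inl x\<close> Inr t by (simp add: rtranclp_trans)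
  qed
next
  case (Inr s) then obtain a b i where s: "s = (a, b, i)" by (cases s)
  have ab: "cv a b" "1 \<le> i" "i \<le> k (a, b)" using pC Inr s by simp_all
  have bA: "b \<in> A" using cvD[OF ab(1)] by blast
  have up: "(R k)\<^sup>*\<^sup>* p (Inl b)" using chain_up[where x=a and y=b and i=i and k=k, OF ab] Inr s by simp
  show ?thesis
  proof (cases q)
    case (Inl y)
    have "y \<in> A" "le b y" using qC pq Inl \<open>p = Inr s\<close> s by simp_all
    then have "(R k)\<^sup>*\<^sup>* (Inl b) (Inl y)" using base_Inl bA by blast
    then show ?thesis using up Inl by (simp add: rtranclp_trans)
  next
    case (Inr t) then obtain a' b' j where t: "t = (a', b', j)" by (cases t)
    have ab': "cv a' b'" "1 \<le> j" "j \<le> k (a', b')" using qC Inr t by simp_all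
    have disj: "(a = a' \<and> b = b' \<and> i \<le> j) \<or> le b a'" using pq \<open>p = Inr s\<close> s Inr t by simp
    show ?thesis
    proof (cases "a = a' \<and> b = b' \<and> i \<le> j")
      case True
      then show ?thesis using chain[where x=a and y=b and i=i and j=j and k=k, OF ab(1,2)] ab' \<open>p = Inr s\<close> s Inr t by simp
    next
      case False
      then have "le b a'" using disj by blast
      then have "(R k)\<^sup>*\<^sup>* (Inl b) (Inl a')" using base_Inl bA cvD[OF ab'(1)] by blast
      moreover have "(R k)\<^sup>*\<^sup>* (Inl a') q" using chain_down[where x=a' and y=b' and i=j and k=k, OF ab'] Inr t by simp
      ultimately show ?thesis using up by (meson rtranclp_trans)
    qed
  qed
qed

lemma ord: "p \<in> C k \<Longrightarrow> q \<in> C k \<Longrightarrow> (R k)\<^sup>*\<^sup>* p q \<longleftrightarrow> leS le p q"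
  using rtr_leS leS_rtr leS_refl by blast

lemma plt_sub: "plt (subdiv (A, le) k) p q \<longleftrightarrow> p \<in> C k \<and> q \<in> C k \<and> leS le p q \<and> p \<noteq> q"
  unfolding subdiv_eq using ord by auto

lemma cov_sub: "covers (subdiv (A, le) k) p q \<longleftrightarrow> p \<in> C k \<and> q \<in> C k \<and> leS le p q \<and> p \<noteq> q \<and>
   \<not> (\<exists>z\<in>C k. leS le p z \<and> p \<noteq> z \<and> leS le z q \<and> z \<noteq> q)"
  unfolding subdiv_eq covers.simps plt.simps using ord by auto

lemma inc_sub: "incomp (subdiv (A, le) k) p q \<longleftrightarrow> p \<in> C k \<and> q \<in> C k \<and> \<not> leS le p q \<and> \<not> leS le q p"
  unfolding subdiv_eq using ord by auto

end

context fposet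
begin

abbreviation "S k \<equiv> subdiv (A, le) k"

lemma cov_InlInl: "covers (S k) (Inl x) (Inl y) \<longleftrightarrow> cv x y \<and> k (x, y) = 0"
proof
  assume cov: "covers (S k) (Inl x) (Inl y)"
  then have xy: "x \<in> A" "y \<in> A" "le x y" "x \<noteq> y"
    and nb: "\<not> (\<exists>z\<in>C k. leS le (Inl x) z \<and> Inl x \<noteq> z \<and> leS le z (Inl y) \<and> z \<noteq> Inl y)"
    unfolding cov_sub by auto
  have "cv x y"
    unfolding cv_def using xy nb by (metis Cs_Inl leS.simps(1) sum.inject(1))
  moreover have "k (x, y) = 0"
  proof (rule ccontr)
    assume "k (x, y) \<noteq> 0"
    then have "Inr (x, y, 1) \<in> C k" using \<open>cv x y\<close> by simp
    moreover have "leS le (Inl x) (Inr (x, y, 1))" "leS le (Inr (x, y, 1)) (Inl y)"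
      using xy refl by auto
    ultimately show False using nb by blast
  qed
  ultimately show "cv x y \<and> k (x, y) = 0" by blast
next
  assume a: "cv x y \<and> k (x, y) = 0"
  then have xy: "x \<in> A" "y \<in> A" "le x y" "x \<noteq> y" using cvD by blast+
  have "\<not> (\<exists>z\<in>C k. leS le (Inl x) z \<and> Inl x \<noteq> z \<and> leS le z (Inl y) \<and> z \<noteq> Inl y)"
  proof
    assume "\<exists>z\<in>C k. leS le (Inl x) z \<and> Inl x \<noteq> z \<and> leS le z (Inl y) \<and> z \<noteq> Inl y"
    then obtain z where z: "z \<in> C k" "leS le (Inl x) z" "Inl x \<noteq> z" "leS le z (Inl y)" "z \<noteq> Inl y"
      by blast
    show False
    proof (cases z)
      case (Inl w)
      then show False using z a unfolding cv_def by auto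
    next
      case (Inr t) then obtain a' b' i where t: "t = (a', b', i)" by (cases t)
      have ab: "cv a' b'" "1 \<le> i" "i \<le> k (a', b')" using z Inr t by simp_all
      have abA: "a' \<in> A" "b' \<in> A" "le a' b'" "a' \<noteq> b'" using cvD[OF ab(1)] by blast+
      have xa: "le x a'" and by': "le b' y" using z Inr t by simp_all
      have "a' = x"
      proof (rule ccontr)
        assume "a' \<noteq> x"
        moreover have "le a' y" using trans[OF abA(1,2) xy(2) abA(3) by'] .
        moreover have "a' \<noteq> y"
        proof
          assume "a' = y"
          then show False using antisym[OF abA(1,2) abA(3)] by' abA(4) by auto
        qed
        ultimately show False using not_between[of x y a'] a abA xa by blast
      qed
      have "b' = y"
      proof (rule ccontr)
        assume "b' \<noteq> y"
        moreover have "le x b'" using trans[OF xy(1) abA(1,2) xa abA(3)] .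
        moreover have "x \<noteq> b'" using \<open>a' = x\<close> abA by auto
        ultimately show False using not_between[of x y b'] a abA by' by blast
      qed
      then show False using ab a \<open>a' = x\<close> by simp
    qed
  qed
  then show "covers (S k) (Inl x) (Inl y)" unfolding cov_sub using xy by simp
qed

lemma cov_Inr_up:
  assumes cov: "covers (S k) (Inr (x, y, i)) q"
  shows "q = (if i < k (x, y) then Inr (x, y, Suc i) else Inl y)"
proof -
  define p :: "'a + 'a \<times> 'a \<times> nat" where "p = Inr (x, y, i)"
  define n where "n = (if i < k (x, y) then Inr (x, y, Suc i) else Inl (y::'a))"
  have pC: "p \<in> C k" and qC: "q \<in> C k" and pq: "leS le p q" "p \<noteq> q"
    and nb: "\<not> (\<exists>z\<in>C k. leS le p z \<and> p \<noteq> z \<and> leS le z q \<and> z \<noteq> q)"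
    using cov unfolding cov_sub p_def by auto
  have xy: "cv x y" "1 \<le> i" "i \<le> k (x, y)" using pC p_def by simp_all
  have yA: "y \<in> A" using cvD[OF xy(1)] by blast
  have nC: "n \<in> C k" using xy yA by (simp add: n_def)
  have pn: "leS le p n" "p \<noteq> n" using yA refl by (auto simp: n_def p_def)
  show ?thesis
  proof (rule ccontr)
    assume qn: "q \<noteq> (if i < k (x, y) then Inr (x, y, Suc i) else Inl y)"
    have "leS le n q"
    proof (cases q)
      case (Inl z)
      then show ?thesis using pq by (auto simp: n_def p_def)
    next
      case (Inr t) then obtain x' y' j where t: "t = (x', y', j)" by (cases t)
      have j: "j \<le> k (x', y')" using qC Inr t by simp
      show ?thesis using pq j qn unfolding n_def p_def Inr t by auto
    qed
    then show False using nb nC pn qn n_def by blast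
  qed
qed

lemma cov_Inr_down:
  assumes cov: "covers (S k) p (Inr (x, y, i))"
  shows "p = (if 1 < i then Inr (x, y, i - 1) else Inl x)"
proof -
  define q :: "'a + 'a \<times> 'a \<times> nat" where "q = Inr (x, y, i)"
  define n where "n = (if 1 < i then Inr (x, y, i - 1) else Inl (x::'a))"
  have pC: "p \<in> C k" and qC: "q \<in> C k" and pq: "leS le p q" "p \<noteq> q"
    and nb: "\<not> (\<exists>z\<in>C k. leS le p z \<and> p \<noteq> z \<and> leS le z q \<and> z \<noteq> q)"
    using cov unfolding cov_sub q_def by auto
  have xy: "cv x y" "1 \<le> i" "i \<le> k (x, y)" using qC q_def by simp_all
  have xA: "x \<in> A" using cvD[OF xy(1)] by blast
  have nC: "n \<in> C k" using xy xA by (auto simp: n_def)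
  have nq: "leS le n q" "n \<noteq> q" using xA refl by (auto simp: n_def q_def)
  show ?thesis
  proof (rule ccontr)
    assume pn: "p \<noteq> (if 1 < i then Inr (x, y, i - 1) else Inl x)"
    have "leS le p n"
    proof (cases p)
      case (Inl z)
      then show ?thesis using pq by (auto simp: n_def q_def)
    next
      case (Inr t) then obtain x' y' j where t: "t = (x', y', j)" by (cases t)
      have j: "1 \<le> j" using pC Inr t by simp
      show ?thesis using pq j pn unfolding n_def q_def Inr t by auto
    qed
    then show False using nb nC nq pn n_def by blast
  qed
qed

lemma cov_C2:
  assumes "cv a c" "1 \<le> k (a, c)"
  shows "covers (S k) (Inr (a, c, k (a, c))) (Inl c)"
proof -
  have ac: "a \<in> A" "c \<in> A" "le a c" "a \<noteq> c" using cvD[OF assms(1)] by blast+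
  have "\<not> (\<exists>z\<in>C k. leS le (Inr (a, c, k (a, c))) z \<and> Inr (a, c, k (a, c)) \<noteq> z \<and> leS le z (Inl c) \<and> z \<noteq> Inl c)"
  proof
    assume "\<exists>z\<in>C k. leS le (Inr (a, c, k (a, c))) z \<and> Inr (a, c, k (a, c)) \<noteq> z \<and> leS le z (Inl c) \<and> z \<noteq> Inl c"
    then obtain z where z: "z \<in> C k" "leS le (Inr (a, c, k (a, c))) z" "Inr (a, c, k (a, c)) \<noteq> z"
        "leS le z (Inl c)" "z \<noteq> Inl c" by blast
    show False
    proof (cases z)
      case (Inl w)
      then show False using z antisym[of c w] ac by auto
    next
      case (Inr t) then obtain x y j where t: "t = (x, y, j)" by (cases t)
      have xy: "cv x y" "j \<le> k (x, y)" using z Inr t by simp_all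
      have xyA: "x \<in> A" "y \<in> A" "le x y" "x \<noteq> y" using cvD[OF xy(1)] by blast+
      have yc: "le y c" using z Inr t by simp
      have "le c x"
        using z Inr t xy by auto
      then have "le c y" using trans[OF ac(2) xyA(1,2)] xyA by blast
      then have "y = c" using antisym[OF xyA(2) ac(2) yc] by blast
      then show False using antisym[OF xyA(1) ac(2)] \<open>le c x\<close> xyA by auto
    qed
  qed
  then show ?thesis unfolding cov_sub using assms ac refl by simp
qed

lemma cov_C3:
  assumes "cv b d" "1 \<le> k (b, d)"
  shows "covers (S k) (Inl b) (Inr (b, d, 1))"
proof -
  have bd: "b \<in> A" "d \<in> A" "le b d" "b \<noteq> d" using cvD[OF assms(1)] by blast+
  have "\<not> (\<exists>z\<in>C k. leS le (Inl b) z \<and> Inl b \<noteq> z \<and> leS le z (Inr (b, d, 1)) \<and> z \<noteq> Inr (b, d, 1))"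
  proof
    assume "\<exists>z\<in>C k. leS le (Inl b) z \<and> Inl b \<noteq> z \<and> leS le z (Inr (b, d, 1)) \<and> z \<noteq> Inr (b, d, 1)"
    then obtain z where z: "z \<in> C k" "leS le (Inl b) z" "Inl b \<noteq> z"
        "leS le z (Inr (b, d, 1))" "z \<noteq> Inr (b, d, 1)" by blast
    show False
    proof (cases z)
      case (Inl w)
      then show False using z antisym[of b w] bd by auto
    next
      case (Inr t) then obtain x y j where t: "t = (x, y, j)" by (cases t)
      have xy: "cv x y" "1 \<le> j" using z Inr t by simp_all
      have xyA: "x \<in> A" "y \<in> A" "le x y" "x \<noteq> y" using cvD[OF xy(1)] by blast+
      have bx: "le b x" using z Inr t by simp
      have "le y b"
        using z Inr t xy by auto
      then have "le x b" using trans[OF xyA(1,2) bd(1)] xyA by blast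
      then have "x = b" using antisym[OF xyA(1) bd(1) _ bx] by blast
      then show False using antisym[OF xyA(2) bd(1)] \<open>le y b\<close> xyA by auto
    qed
  qed
  then show ?thesis unfolding cov_sub using assms bd refl by simp
qed

lemma N1:
  assumes "is_N (S k) a b c d"
  shows "\<exists>b' c'. b = Inl b' \<and> c = Inl c' \<and> (b', c') \<in> bad (A, le) {e. 1 \<le> k e}"
proof -
  have bc: "covers (S k) b c" and ac: "covers (S k) a c" and bd: "covers (S k) b d"
    and ad: "incomp (S k) a d" using assms unfolding is_N_def by blast+
  have cd: "c \<noteq> d" using ac ad unfolding cov_sub inc_sub by blast
  have ab: "a \<noteq> b" using bd ad unfolding cov_sub inc_sub by blast
  obtain b' where b': "b = Inl b'"
  proof (cases b)
    case (Inr t) then obtain x y i where "t = (x, y, i)" by (cases t)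
    then show ?thesis using cov_Inr_up[of k x y i c] cov_Inr_up[of k x y i d] bc bd cd Inr by auto
  qed
  obtain c' where c': "c = Inl c'"
  proof (cases c)
    case (Inr t) then obtain x y i where "t = (x, y, i)" by (cases t)
    then show ?thesis using cov_Inr_down[of k a x y i] cov_Inr_down[of k b x y i] bc ac ab Inr by auto
  qed
  have bc': "cv b' c'" "k (b', c') = 0" using bc b' c' cov_InlInl by auto
  obtain a' where a': "cv a' c'" "(a = Inl a' \<and> k (a', c') = 0) \<or> (a = Inr (a', c', k (a', c')) \<and> 1 \<le> k (a', c'))"
  proof (cases a)
    case (Inl x)
    then show ?thesis using that ac c' cov_InlInl by auto
  next
    case (Inr t) then obtain x y i where t: "t = (x, y, i)" by (cases t)
    have "Inl c' = (if i < k (x, y) then Inr (x, y, Suc i) else Inl y)"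
      using cov_Inr_up[of k x y i "Inl c'"] ac c' Inr t by simp
    then have "y = c'" "\<not> i < k (x, y)" by (auto split: if_splits)
    moreover have "cv x y" "1 \<le> i" "i \<le> k (x, y)" using ac Inr t unfolding cov_sub by auto
    ultimately show ?thesis using that[of x] Inr t by auto
  qed
  obtain d' where d': "cv b' d'" "(d = Inl d' \<and> k (b', d') = 0) \<or> (d = Inr (b', d', 1) \<and> 1 \<le> k (b', d'))"
  proof (cases d)
    case (Inl x)
    then show ?thesis using that bd b' cov_InlInl by auto
  next
    case (Inr t) then obtain x y i where t: "t = (x, y, i)" by (cases t)
    have "Inl b' = (if 1 < i then Inr (x, y, i - 1) else Inl x)"
      using cov_Inr_down[of k "Inl b'" x y i] bd b' Inr t by simp
    then have "x = b'" "\<not> 1 < i" by (auto split: if_splits)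
    moreover have "cv x y" "1 \<le> i" "i \<le> k (x, y)" using bd Inr t unfolding cov_sub by auto
    ultimately show ?thesis using that[of y] Inr t by auto
  qed
  have a'b': "a' \<noteq> b'" using a' ab b' bc' by auto
  have d'c': "d' \<noteq> c'" using d' cd c' bc' by auto
  have "incomp (A, le) a' d' \<or> (a', c') \<in> {e. 1 \<le> k e} \<or> (b', d') \<in> {e. 1 \<le> k e}"
  proof (cases "1 \<le> k (a', c') \<or> 1 \<le> k (b', d')")
    case True then show ?thesis by auto
  next
    case False
    then have "a = Inl a'" "d = Inl d'" using a' d' by auto
    then show ?thesis using ad unfolding inc_sub by simp
  qed
  then have "(b', c') \<in> bad (A, le) {e. 1 \<le> k e}"
    unfolding mem_bad using bc' a' d' a'b' d'c' by auto
  then show ?thesis using b' c' by blast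
qed

lemma N2:
  assumes "(b', c') \<in> bad (A, le) {e. 1 \<le> k e}"
  shows "\<exists>a d. is_N (S k) a (Inl b') (Inl c') d"
proof -
  obtain a' d' where bc: "cv b' c'" "k (b', c') = 0" and w: "cv a' c'" "cv b' d'" "a' \<noteq> b'" "d' \<noteq> c'"
    and alt: "incomp (A, le) a' d' \<or> 1 \<le> k (a', c') \<or> 1 \<le> k (b', d')"
    using assms unfolding mem_bad by auto
  have bcA: "b' \<in> A" "c' \<in> A" "le b' c'" "b' \<noteq> c'" using cvD[OF bc(1)] by blast+
  have a'A: "a' \<in> A" "le a' c'" using cvD[OF w(1)] by blast+
  have d'A: "d' \<in> A" "le b' d'" "b' \<noteq> d'" using cvD[OF w(2)] by blast+
  have n1: "\<not> le c' d'"
  proof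
    assume "le c' d'"
    then show False using not_between[OF w(2) bcA(2)] bcA w(4) by blast
  qed
  have n2: "\<not> le d' a'" using wit_imp[OF bc(1) w(1) w(2) w(4)] by blast
  have n3: "\<not> le a' b'"
  proof
    assume "le a' b'"
    then show False using not_between[OF w(1) bcA(1)] bcA w(3) by blast
  qed
  have n4: "\<not> le c' b'" using antisym[OF bcA(1,2) bcA(3)] bcA(4) by blast
  define a :: "'a + 'a \<times> 'a \<times> nat" where "a = (if 1 \<le> k (a', c') then Inr (a', c', k (a', c')) else Inl a')"
  define d :: "'a + 'a \<times> 'a \<times> nat" where "d = (if 1 \<le> k (b', d') then Inr (b', d', 1) else Inl d')"
  have c1: "covers (S k) (Inl b') (Inl c')" using bc cov_InlInl by simp
  have c2: "covers (S k) a (Inl c')" using cov_C2[OF w(1)] cov_InlInl w(1) by (simp add: a_def)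
  have c3: "covers (S k) (Inl b') d" using cov_C3[OF w(2)] cov_InlInl w(2) by (simp add: d_def)
  have aC: "a \<in> C k" using c2 unfolding cov_sub by blast
  have dC: "d \<in> C k" using c3 unfolding cov_sub by blast
  have "\<not> leS le a d \<and> \<not> leS le d a"
    using n1 n2 n3 n4 alt w(3) unfolding a_def d_def by (auto simp: inc_def)
  then have "incomp (S k) a d" unfolding inc_sub using aC dC by blast
  then show ?thesis using c1 c2 c3 unfolding is_N_def by blast
qed

lemma Nfree_sub: "N_free (S k) \<longleftrightarrow> bad (A, le) {e. 1 \<le> k e} = {}"
proof
  assume "N_free (S k)"
  then show "bad (A, le) {e. 1 \<le> k e} = {}" using N2 unfolding N_free_def by fast
next
  assume "bad (A, le) {e. 1 \<le> k e} = {}"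
  then show "N_free (S k)" using N1 unfolding N_free_def by fast
qed

lemma Ndiag_sub: "N_diag (S k) = (\<lambda>(b, c). (Inl b, Inl c)) ` bad (A, le) {e. 1 \<le> k e}"
proof
  show "N_diag (S k) \<subseteq> (\<lambda>(b, c). (Inl b, Inl c)) ` bad (A, le) {e. 1 \<le> k e}"
    unfolding N_diag_def using N1 by fastforce
  show "(\<lambda>(b, c). (Inl b, Inl c)) ` bad (A, le) {e. 1 \<le> k e} \<subseteq> N_diag (S k)"
    unfolding N_diag_def using N2 by fastforce
qed

end

lemma rtr_map:
  assumes "\<And>x y. R x y \<Longrightarrow> S\<^sup>*\<^sup>* (g x) (g y)" and "R\<^sup>*\<^sup>* x y"
  shows "S\<^sup>*\<^sup>* (g x) (g y)"
  using assms(2)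
proof (induction rule: rtranclp_induct)
  case base then show ?case by simp
next
  case (step y z)
  then show ?case using assms(1)[OF step(2)] by (meson rtranclp_trans)
qed

lemma iso_byWitness:
  assumes "\<forall>x\<in>A. h (g x) = x" "\<forall>y\<in>B. g (h y) = y" "g ` A \<subseteq> B" "h ` B \<subseteq> A"
    and "\<forall>x\<in>A. \<forall>y\<in>A. le x y \<longleftrightarrow> le' (g x) (g y)"
  shows "poset_iso (A, le) (B, le')"
  unfolding poset_iso_def using bij_betw_byWitness[OF assms(1-4)] assms(5) by auto

lemma iso_sym:
  assumes "poset_iso P Q" shows "poset_iso Q P"
proof -
  obtain f where f: "bij_betw f (fst P) (fst Q)"
    and r: "\<forall>x\<in>fst P. \<forall>y\<in>fst P. snd P x y \<longleftrightarrow> snd Q (f x) (f y)"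
    using assms unfolding poset_iso_def by blast
  define g where "g = inv_into (fst P) f"
  have g: "bij_betw g (fst Q) (fst P)" using bij_betw_inv_into[OF f] g_def by simp
  have fg: "f (g y) = y" if "y \<in> fst Q" for y
    using that f g_def by (meson bij_betw_inv_into_right)
  have "\<forall>x\<in>fst Q. \<forall>y\<in>fst Q. snd Q x y \<longleftrightarrow> snd P (g x) (g y)"
  proof (intro ballI)
    fix x y assume "x \<in> fst Q" "y \<in> fst Q"
    moreover have "g x \<in> fst P" "g y \<in> fst P" using g \<open>x \<in> fst Q\<close> \<open>y \<in> fst Q\<close> bij_betwE by blast+
    ultimately have "snd P (g x) (g y) \<longleftrightarrow> snd Q (f (g x)) (f (g y))" using r by blast
    then show "snd Q x y \<longleftrightarrow> snd P (g x) (g y)" using fg \<open>x \<in> fst Q\<close> \<open>y \<in> fst Q\<close> by simp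
  qed
  then show ?thesis using g unfolding poset_iso_def by blast
qed

lemma iso_trans:
  assumes "poset_iso P Q" "poset_iso Q T" shows "poset_iso P T"
proof -
  obtain f where f: "bij_betw f (fst P) (fst Q)"
    and r: "\<forall>x\<in>fst P. \<forall>y\<in>fst P. snd P x y \<longleftrightarrow> snd Q (f x) (f y)"
    using assms(1) unfolding poset_iso_def by blast
  obtain g where g: "bij_betw g (fst Q) (fst T)"
    and r': "\<forall>x\<in>fst Q. \<forall>y\<in>fst Q. snd Q x y \<longleftrightarrow> snd T (g x) (g y)"
    using assms(2) unfolding poset_iso_def by blast
  have "bij_betw (g \<circ> f) (fst P) (fst T)" using bij_betw_trans[OF f g] .
  moreover have "\<forall>x\<in>fst P. \<forall>y\<in>fst P. snd P x y \<longleftrightarrow> snd T ((g \<circ> f) x) ((g \<circ> f) y)"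
  proof (intro ballI)
    fix x y assume xy: "x \<in> fst P" "y \<in> fst P"
    then have "f x \<in> fst Q" "f y \<in> fst Q" using f bij_betwE by blast+
    then show "snd P x y \<longleftrightarrow> snd T ((g \<circ> f) x) ((g \<circ> f) y)" using r r' xy by simp
  qed
  ultimately show ?thesis unfolding poset_iso_def by blast
qed

lemma iso_card: "poset_iso P Q \<Longrightarrow> card (fst P) = card (fst Q)"
  unfolding poset_iso_def using bij_betw_same_card by blast

lemma iso_finite: "poset_iso P Q \<Longrightarrow> finite (fst Q) \<Longrightarrow> finite (fst P)"
  unfolding poset_iso_def using bij_betw_finite by blast

lemma iso_N:
  assumes f: "bij_betw f A B" and r: "\<forall>x\<in>A. \<forall>y\<in>A. le x y \<longleftrightarrow> le' (f x) (f y)"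
    and N: "is_N (A, le) a b c d"
  shows "is_N (B, le') (f a) (f b) (f c) (f d)"
proof -
  have inj: "x \<in> A \<Longrightarrow> y \<in> A \<Longrightarrow> f x = f y \<longleftrightarrow> x = y" for x y
    using f by (metis bij_betw_inv_into_left)
  have fA: "x \<in> A \<Longrightarrow> f x \<in> B" for x using f bij_betwE by blast
  have surj: "z \<in> B \<Longrightarrow> \<exists>w\<in>A. z = f w" for z using f by (metis bij_betw_imp_surj_on imageE)
  have plt: "x \<in> A \<Longrightarrow> y \<in> A \<Longrightarrow> plt (A, le) x y \<longleftrightarrow> plt (B, le') (f x) (f y)" for x y
    using inj fA r by auto
  have cov: "covers (A, le) x y \<longleftrightarrow> covers (B, le') (f x) (f y)" if xy: "x \<in> A" "y \<in> A" for x y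
  proof -
    have "(\<exists>z\<in>B. plt (B, le') (f x) z \<and> plt (B, le') z (f y)) \<longleftrightarrow> (\<exists>w\<in>A. plt (B, le') (f x) (f w) \<and> plt (B, le') (f w) (f y))"
      using surj fA by blast
    also have "\<dots> \<longleftrightarrow> (\<exists>w\<in>A. plt (A, le) x w \<and> plt (A, le) w y)" using plt xy by blast
    finally show ?thesis unfolding covers.simps using plt[OF xy] by blast
  qed
  have inc: "x \<in> A \<Longrightarrow> y \<in> A \<Longrightarrow> incomp (A, le) x y \<longleftrightarrow> incomp (B, le') (f x) (f y)" for x y
    using fA r by auto
  have mem: "a \<in> A" "b \<in> A" "c \<in> A" "d \<in> A" using N unfolding is_N_def covers.simps by auto
  show ?thesis using N mem cov inc unfolding is_N_def by blast
qed

lemma iso_N':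
  assumes "poset_iso P Q" "is_N P a b c d"
  shows "\<exists>f. bij_betw f (fst P) (fst Q) \<and> (\<forall>x\<in>fst P. \<forall>y\<in>fst P. snd P x y \<longleftrightarrow> snd Q (f x) (f y))
     \<and> is_N Q (f a) (f b) (f c) (f d)"
proof -
  obtain f where f: "bij_betw f (fst P) (fst Q)"
    and r: "\<forall>x\<in>fst P. \<forall>y\<in>fst P. snd P x y \<longleftrightarrow> snd Q (f x) (f y)"
    using assms(1) unfolding poset_iso_def by blast
  have "is_N Q (f a) (f b) (f c) (f d)"
    using iso_N[of f "fst P" "fst Q" "snd P" "snd Q"] f r assms(2) by simp
  then show ?thesis using f r by blast
qed

lemma iso_Nfree:
  assumes iso: "poset_iso P Q" and fr: "N_free P" shows "N_free Q"
  unfolding N_free_def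
proof
  assume "\<exists>a b c d. is_N Q a b c d"
  then obtain a b c d where "is_N Q a b c d" by blast
  then obtain f where "is_N P (f a) (f b) (f c) (f d)" using iso_N'[OF iso_sym[OF iso]] by blast
  then show False using fr unfolding N_free_def by blast
qed

lemma iso_add_dummy:
  assumes f: "bij_betw f A B" and r: "\<forall>x\<in>A. \<forall>y\<in>A. le x y \<longleftrightarrow> le' (f x) (f y)"
    and bc: "b \<in> A" "c \<in> A" and u: "u \<notin> A" and v: "v \<notin> B"
  shows "poset_iso (add_dummy (A, le) b c u) (add_dummy (B, le') (f b) (f c) v)"
proof -
  define R where "R = (\<lambda>p q. (p \<in> A \<and> q \<in> A \<and> le p q) \<or> (p = b \<and> q = u) \<or> (p = u \<and> q = c))"
  define R' where "R' = (\<lambda>p q. (p \<in> B \<and> q \<in> B \<and> le' p q) \<or> (p = f b \<and> q = v) \<or> (p = v \<and> q = f c))"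
  define g where "g = f(u := v)"
  define h where "h = (inv_into A f)(v := u)"
  have fA: "x \<in> A \<Longrightarrow> f x \<in> B" for x using f bij_betwE by blast
  have hB: "y \<in> B \<Longrightarrow> inv_into A f y \<in> A" for y using f bij_betwE bij_betw_inv_into by blast
  have hf: "x \<in> A \<Longrightarrow> inv_into A f (f x) = x" for x using f bij_betw_inv_into_left by fast
  have fh: "y \<in> B \<Longrightarrow> f (inv_into A f y) = y" for y using f bij_betw_inv_into_right by fast
  have g1: "\<forall>x\<in>insert u A. h (g x) = x" using u v fA hf by (auto simp: g_def h_def)
  have g2: "\<forall>y\<in>insert v B. g (h y) = y" using u v hB fh by (auto simp: g_def h_def)
  have g3: "g ` insert u A \<subseteq> insert v B" using u fA by (auto simp: g_def)
  have g4: "h ` insert v B \<subseteq> insert u A" using v hB by (auto simp: h_def)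
  have RR': "R p q \<Longrightarrow> R'\<^sup>*\<^sup>* (g p) (g q)" for p q
  proof -
    assume "R p q"
    then have "R' (g p) (g q)" using u fA r bc unfolding R_def R'_def g_def by auto
    then show ?thesis by blast
  qed
  have R'R: "R' p q \<Longrightarrow> R\<^sup>*\<^sup>* (h p) (h q)" for p q
  proof -
    assume a: "R' p q"
    have "R (h p) (h q)"
    proof -
      consider "p \<in> B" "q \<in> B" "le' p q" | "p = f b" "q = v" | "p = v" "q = f c"
        using a unfolding R'_def by blast
      then show ?thesis
      proof cases
        case 1
        then have "le (h p) (h q)" using r hB fh v by (auto simp: h_def)
        then show ?thesis using 1 hB v unfolding R_def h_def by auto
      next
        case 2 then show ?thesis using fA bc v hf unfolding R_def h_def by auto
      next
        case 3 then show ?thesis using fA bc v hf unfolding R_def h_def by auto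
      qed
    qed
    then show ?thesis by blast
  qed
  have "\<forall>x\<in>insert u A. \<forall>y\<in>insert u A. R\<^sup>*\<^sup>* x y \<longleftrightarrow> R'\<^sup>*\<^sup>* (g x) (g y)"
  proof (intro ballI iffI)
    fix x y assume "R\<^sup>*\<^sup>* x y" then show "R'\<^sup>*\<^sup>* (g x) (g y)" using rtr_map[of R R' g] RR' by blast
  next
    fix x y assume xy: "x \<in> insert u A" "y \<in> insert u A" and "R'\<^sup>*\<^sup>* (g x) (g y)"
    then have "R\<^sup>*\<^sup>* (h (g x)) (h (g y))" using rtr_map[of R' R h] R'R by blast
    moreover have "h (g x) = x" "h (g y) = y" using g1 xy by blast+
    ultimately show "R\<^sup>*\<^sup>* x y" by simp
  qed
  then have "poset_iso (insert u A, R\<^sup>*\<^sup>*) (insert v B, R'\<^sup>*\<^sup>*)"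
    using iso_byWitness[OF g1 g2 g3 g4] by blast
  then show ?thesis unfolding R_def R'_def by simp
qed

lemma supp_ind[simp]: "{e. 1 \<le> ind K e} = K"
  by (auto simp: ind_def)

context fposet
begin

lemma C_ind: "C (ind K) = Inl ` A \<union> (\<lambda>(x, y). Inr (x, y, 1)) ` {e \<in> K. cv (fst e) (snd e)}"
  by (auto simp: Cs_def ind_def image_iff, blast)

lemma C_ind_finite: "finite (C (ind K))"
proof -
  have "{e \<in> K. cv (fst e) (snd e)} \<subseteq> A \<times> A" using cvD by auto
  then have "finite {e \<in> K. cv (fst e) (snd e)}" using fin by (meson finite_SigmaI finite_subset)
  then show ?thesis unfolding C_ind using fin by simp
qed

lemma C_ind_card: "K \<subseteq> K0 \<Longrightarrow> card (C (ind K)) = card A + card K"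
proof -
  assume K: "K \<subseteq> K0"
  have e: "{e \<in> K. cv (fst e) (snd e)} = K" using K K0_cov by auto
  have KA: "K \<subseteq> A \<times> A" using K K0_cov cvD by fastforce
  then have fK: "finite K" using fin by (meson finite_SigmaI finite_subset)
  have "card (Inl ` A \<union> (\<lambda>(x, y). Inr (x, y, 1)) ` K :: ('a + 'a \<times> 'a \<times> nat) set) = card (Inl ` A :: ('a + 'a \<times> 'a \<times> nat) set) + card ((\<lambda>(x, y). Inr (x, y, 1)) ` K :: ('a + 'a \<times> 'a \<times> nat) set)"
    by (rule card_Un_disjoint) (use fin fK in auto)
  also have "card (Inl ` A :: ('a + 'a \<times> 'a \<times> nat) set) = card A" by (rule card_image) simp
  also have "card ((\<lambda>(x, y). Inr (x, y, 1)) ` K :: ('a + 'a \<times> 'a \<times> nat) set) = card K"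
    by (rule card_image) (auto simp: inj_on_def)
  finally show ?thesis unfolding C_ind e .
qed

lemma iso_base: "poset_iso (A, le) (S (ind {}))"
proof -
  have C0: "C (ind {}) = Inl ` A" unfolding C_ind by simp
  show ?thesis unfolding subdiv_eq
  proof (rule iso_byWitness[where g = Inl and h = projl])
    show "\<forall>x\<in>A. \<forall>y\<in>A. le x y \<longleftrightarrow> (R (ind {}))\<^sup>*\<^sup>* (Inl x) (Inl y)"
      using ord by simp
  qed (auto simp: C0)
qed

lemma R_mono:
  assumes kk: "\<And>e. 1 \<le> k e \<Longrightarrow> k' e = k e" and a: "R k p q" shows "R k' p q"
proof -
  from a consider (a) x y where "p = Inl x" "q = Inl y" "x \<in> A" "y \<in> A" "le x y"
    | (b) x y where "cv x y" "1 \<le> k (x, y)" "p = Inl x" "q = Inr (x, y, 1)"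
    | (c) x y i where "cv x y" "1 \<le> i" "i < k (x, y)" "p = Inr (x, y, i)" "q = Inr (x, y, Suc i)"
    | (d) x y where "cv x y" "1 \<le> k (x, y)" "p = Inr (x, y, k (x, y))" "q = Inl y"
    by (simp only: subdiv_base.simps) blast
  then show ?thesis
  proof cases
    case a then show ?thesis by simp
  next
    case b then show ?thesis using kk[of "(x, y)"] by auto
  next
    case c then show ?thesis using kk[of "(x, y)"] by auto
  next
    case d then show ?thesis using kk[of "(x, y)"] by auto
  qed
qed

lemma add_dummy_sub:
  assumes bc: "cv b c" and nK: "(b, c) \<notin> K"
  shows "add_dummy (S (ind K)) (Inl b) (Inl c) (Inr (b, c, 1)) = S (ind (insert (b, c) K))"
proof -
  let ?k = "ind K" and ?k' = "ind (insert (b, c) K)"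
  define Ra where "Ra = (\<lambda>p q. (p \<in> C ?k \<and> q \<in> C ?k \<and> (R ?k)\<^sup>*\<^sup>* p q) \<or> (p = Inl b \<and> q = Inr (b, c, 1)) \<or> (p = Inr (b, c, 1) \<and> q = Inl c))"
  have lhs: "add_dummy (S ?k) (Inl b) (Inl c) (Inr (b, c, 1)) = (insert (Inr (b, c, 1)) (C ?k), Ra\<^sup>*\<^sup>*)"
    unfolding subdiv_eq Ra_def by simp
  have car: "insert (Inr (b, c, 1)) (C ?k) = C ?k'"
    using bc nK by (auto simp: Cs_def ind_def)
  have kk: "1 \<le> ?k e \<Longrightarrow> ?k' e = ?k e" for e by (auto simp: ind_def split: if_splits)
  have "Ra \<le> (R ?k')\<^sup>*\<^sup>*"
  proof (intro predicate2I)
    fix p q assume "Ra p q"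
    then consider "(R ?k)\<^sup>*\<^sup>* p q" | "p = Inl b" "q = Inr (b, c, 1)" | "p = Inr (b, c, 1)" "q = Inl c"
      unfolding Ra_def by blast
    then show "(R ?k')\<^sup>*\<^sup>* p q"
    proof cases
      case 1
      have "R ?k \<le> R ?k'" using R_mono[of ?k ?k'] kk by blast
      then show ?thesis using 1 rtranclp_mono by blast
    next
      case 2
      have "R ?k' p q" using 2 bc by (auto simp: ind_def)
      then show ?thesis by blast
    next
      case 3
      have "R ?k' p q" using 3 bc by (auto simp: ind_def)
      then show ?thesis by blast
    qed
  qed
  moreover have "R ?k' \<le> Ra\<^sup>*\<^sup>*"
  proof (intro predicate2I)
    fix p q assume a: "R ?k' p q"
    show "Ra\<^sup>*\<^sup>* p q"
    proof (cases "R ?k p q")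
      case True
      then have "Ra p q" using base_leS[OF True] unfolding Ra_def by blast
      then show ?thesis by blast
    next
      case False
      have "Ra p q"
        using a False bc nK unfolding Ra_def
        by (simp only: subdiv_base.simps) (auto simp: ind_def split: if_splits)
      then show ?thesis by blast
    qed
  qed
  ultimately have "R ?k' \<le> Ra\<^sup>*\<^sup>*" "Ra\<^sup>*\<^sup>* \<le> (R ?k')\<^sup>*\<^sup>*"
    by (metis rtranclp_mono rtranclp_idemp)+
  then have "(Ra\<^sup>*\<^sup>*)\<^sup>*\<^sup>* = (R ?k')\<^sup>*\<^sup>*" by (rule rtranclp_subset)
  then have eq: "Ra\<^sup>*\<^sup>* = (R ?k')\<^sup>*\<^sup>*" by (simp add: rtranclp_idemp)
  have "S ?k' = (C ?k', (R ?k')\<^sup>*\<^sup>*)" by (rule subdiv_eq)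
  then show ?thesis using lhs car eq by metis
qed

end

declare subdiv.simps[simp del]

lemma subdiv_eq_gen: "subdiv (A', le') k = (Cs A' le' k, (subdiv_base (A', le') k)\<^sup>*\<^sup>*)"
  by (simp add: subdiv.simps Cs_def)

lemma sb_start: "covers (A', le') x y \<Longrightarrow> 1 \<le> k (x, y) \<Longrightarrow> subdiv_base (A', le') k (Inl x) (Inr (x, y, 1))"
  by auto

lemma sb_end: "covers (A', le') x y \<Longrightarrow> 1 \<le> k (x, y) \<Longrightarrow> subdiv_base (A', le') k (Inr (x, y, k (x, y))) (Inl y)"
  by auto

context fposet
begin

abbreviation "k1 \<equiv> ind K1"
abbreviation "k0 \<equiv> ind K0"
abbreviation D :: "(('a + 'a \<times> 'a \<times> nat) \<times> ('a + 'a \<times> 'a \<times> nat)) set"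
  where "D \<equiv> (\<lambda>(b, c). (Inl b, Inl c)) ` bad (A, le) K1"

lemma SN1: "SN (A, le) = S k1"
  unfolding SN_def Ndiag_K1 ind_def by simp

lemma SN2: "SN (S k1) = subdiv (C k1, (R k1)\<^sup>*\<^sup>*) (ind D)"
proof -
  have "N_diag (S k1) = D" using Ndiag_sub[of k1] unfolding supp_ind .
  then have "SN (S k1) = subdiv (S k1) (ind D)" unfolding SN_def ind_def by simp
  then show ?thesis by (simp add: subdiv_eq)
qed

lemma K1_K0: "K1 \<subseteq> K0" by blast

lemma bad_notK1: "(b, c) \<in> bad (A, le) K1 \<Longrightarrow> (b, c) \<notin> K1"
  unfolding mem_bad by blast

lemma CC_Inl: "Inl p \<in> Cs (C k1) ((R k1)\<^sup>*\<^sup>*) (ind D) \<longleftrightarrow> p \<in> C k1"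
  by (auto simp: Cs_def)

lemma CC_Inr: "Inr (x, y, i) \<in> Cs (C k1) ((R k1)\<^sup>*\<^sup>*) (ind D) \<longleftrightarrow>
   (\<exists>b c. x = Inl b \<and> y = Inl c \<and> (b, c) \<in> bad (A, le) K1 \<and> i = 1)"
proof
  assume "Inr (x, y, i) \<in> Cs (C k1) ((R k1)\<^sup>*\<^sup>*) (ind D)"
  then have "1 \<le> i" "i \<le> ind D (x, y)" by (auto simp: Cs_def)
  then have "(x, y) \<in> D" "i = 1" by (auto simp: ind_def split: if_splits)
  then show "\<exists>b c. x = Inl b \<and> y = Inl c \<and> (b, c) \<in> bad (A, le) K1 \<and> i = 1" by auto
next
  assume "\<exists>b c. x = Inl b \<and> y = Inl c \<and> (b, c) \<in> bad (A, le) K1 \<and> i = 1"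
  then obtain b c where bc: "x = Inl b" "y = Inl c" "(b, c) \<in> bad (A, le) K1" "i = 1" by blast
  have "cv b c" using bc(3) unfolding mem_bad by blast
  moreover have "k1 (b, c) = 0" using bad_notK1[OF bc(3)] by (simp add: ind_def)
  ultimately have "covers (S k1) (Inl b) (Inl c)" using cov_InlInl by blast
  then have "covers (C k1, (R k1)\<^sup>*\<^sup>*) x y" using bc by (simp add: subdiv_eq)
  moreover have "ind D (x, y) = 1" using bc by (auto simp: ind_def)
  ultimately show "Inr (x, y, i) \<in> Cs (C k1) ((R k1)\<^sup>*\<^sup>*) (ind D)" using bc by (auto simp: Cs_def)
qed

lemma Ck_Inr_ind: "Inr (x, y, i) \<in> C (ind K) \<longleftrightarrow> cv x y \<and> (x, y) \<in> K \<and> i = 1"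
  by (auto simp: ind_def)

lemma SNSN: "poset_iso (SN (SN (A, le))) (S k0)"
proof -
  define g :: "('a + 'a \<times> 'a \<times> nat) + ('a + 'a \<times> 'a \<times> nat) \<times> ('a + 'a \<times> 'a \<times> nat) \<times> nat \<Rightarrow> 'a + 'a \<times> 'a \<times> nat"
    where "g z = (case z of Inl p \<Rightarrow> p | Inr (x, y, i) \<Rightarrow> Inr (projl x, projl y, i))" for z
  define h :: "'a + 'a \<times> 'a \<times> nat \<Rightarrow> ('a + 'a \<times> 'a \<times> nat) + ('a + 'a \<times> 'a \<times> nat) \<times> ('a + 'a \<times> 'a \<times> nat) \<times> nat"
    where "h p = (case p of Inl x \<Rightarrow> Inl (Inl x)
       | Inr (x, y, i) \<Rightarrow> (if (x, y) \<in> K1 then Inl (Inr (x, y, i)) else Inr (Inl x, Inl y, i)))" for p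
  let ?CC = "Cs (C k1) ((R k1)\<^sup>*\<^sup>*) (ind D)"
  let ?R2 = "subdiv_base (C k1, (R k1)\<^sup>*\<^sup>*) (ind D)"
  have "SN (SN (A, le)) = subdiv (C k1, (R k1)\<^sup>*\<^sup>*) (ind D)" by (simp only: SN1 SN2)
  also have "\<dots> = (?CC, ?R2\<^sup>*\<^sup>*)" by (rule subdiv_eq_gen)
  finally have SS: "SN (SN (A, le)) = (?CC, ?R2\<^sup>*\<^sup>*)" .
  have bK0: "(b, c) \<in> bad (A, le) K1 \<Longrightarrow> (b, c) \<in> K0" for b c by blast
  have cvK: "(b, c) \<in> bad (A, le) K1 \<Longrightarrow> cv b c" for b c unfolding mem_bad by blast
  have cvK1: "(b, c) \<in> K1 \<Longrightarrow> cv b c" for b c unfolding mem_bad by blast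
  have g1: "\<forall>z\<in>?CC. h (g z) = z"
  proof
    fix z assume z: "z \<in> ?CC"
    show "h (g z) = z"
    proof (cases z)
      case (Inl p)
      show ?thesis
      proof (cases p)
        case (Inl x) then show ?thesis using \<open>z = Inl p\<close> by (simp add: g_def h_def)
      next
        case (Inr t) then obtain x y i where t: "t = (x, y, i)" by (cases t)
        have "p \<in> C k1" using z \<open>z = Inl p\<close> CC_Inl by simp
        then have "(x, y) \<in> K1" using Inr t Ck_Inr_ind by simp
        then show ?thesis using \<open>z = Inl p\<close> Inr t by (simp add: g_def h_def)
      qed
    next
      case (Inr t) then obtain x y i where t: "t = (x, y, i)" by (cases t)
      then obtain b c where "x = Inl b" "y = Inl c" "(b, c) \<in> bad (A, le) K1" "i = 1"
        using z Inr CC_Inr by blast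
      then show ?thesis using Inr t bad_notK1 by (simp add: g_def h_def)
    qed
  qed
  have g2: "\<forall>p\<in>C k0. g (h p) = p"
  proof
    fix p assume p: "p \<in> C k0"
    show "g (h p) = p"
    proof (cases p)
      case (Inl x) then show ?thesis by (simp add: g_def h_def)
    next
      case (Inr t) then obtain x y i where t: "t = (x, y, i)" by (cases t)
      then show ?thesis using Inr by (simp add: g_def h_def)
    qed
  qed
  have g3: "g ` ?CC \<subseteq> C k0"
  proof
    fix q assume "q \<in> g ` ?CC"
    then obtain z where z: "z \<in> ?CC" "q = g z" by blast
    show "q \<in> C k0"
    proof (cases z)
      case (Inl p)
      then have "p \<in> C k1" using z CC_Inl by simp
      then have "p \<in> C k0"
        by (cases p) (auto simp: Ck_Inr_ind simp del: Cs_Inr)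
      then show ?thesis using z Inl by (simp add: g_def)
    next
      case (Inr t) then obtain x y i where t: "t = (x, y, i)" by (cases t)
      then obtain b c where bc: "x = Inl b" "y = Inl c" "(b, c) \<in> bad (A, le) K1" "i = 1"
        using z Inr CC_Inr by blast
      then have "Inr (b, c, 1) \<in> C k0" using Ck_Inr_ind cvK bK0 by blast
      then show ?thesis using z Inr t bc by (simp add: g_def)
    qed
  qed
  have g4: "h ` C k0 \<subseteq> ?CC"
  proof
    fix z assume "z \<in> h ` C k0"
    then obtain p where p: "p \<in> C k0" "z = h p" by blast
    show "z \<in> ?CC"
    proof (cases p)
      case (Inl x)
      then show ?thesis using p CC_Inl by (simp add: h_def)
    next
      case (Inr t) then obtain x y i where t: "t = (x, y, i)" by (cases t)
      have xy: "cv x y" "(x, y) \<in> K0" "i = 1" using p Inr t Ck_Inr_ind by blast+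
      show ?thesis
      proof (cases "(x, y) \<in> K1")
        case True
        then have "Inr (x, y, i) \<in> C k1" using xy Ck_Inr_ind by blast
        then show ?thesis using p Inr t True CC_Inl by (simp add: h_def)
      next
        case False
        then have "(x, y) \<in> bad (A, le) K1" using xy by blast
        then show ?thesis using p Inr t False CC_Inr xy by (simp add: h_def)
      qed
    qed
  qed
  have Rmono10: "R k1 \<le> R k0"
    using R_mono[of k1 k0] by (auto simp: ind_def split: if_splits)
  have fw: "?R2 z w \<Longrightarrow> (R k0)\<^sup>*\<^sup>* (g z) (g w)" for z w
  proof -
    assume a: "?R2 z w"
    from a consider (a) p q where "z = Inl p" "w = Inl q" "p \<in> C k1" "q \<in> C k1" "(R k1)\<^sup>*\<^sup>* p q"
      | (b) x y where "covers (C k1, (R k1)\<^sup>*\<^sup>*) x y" "1 \<le> ind D (x, y)" "z = Inl x" "w = Inr (x, y, 1)"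
      | (c) x y i where "covers (C k1, (R k1)\<^sup>*\<^sup>*) x y" "1 \<le> i" "i < ind D (x, y)" "z = Inr (x, y, i)" "w = Inr (x, y, Suc i)"
      | (d) x y where "covers (C k1, (R k1)\<^sup>*\<^sup>*) x y" "1 \<le> ind D (x, y)" "z = Inr (x, y, ind D (x, y))" "w = Inl y"
      by (simp only: subdiv_base.simps) blast
    then show ?thesis
    proof cases
      case a
      then show ?thesis using rtranclp_mono[OF Rmono10] by (auto simp: g_def)
    next
      case b
      then obtain b' c' where bc: "x = Inl b'" "y = Inl c'" "(b', c') \<in> bad (A, le) K1"
        by (auto simp: ind_def split: if_splits)
      have "R k0 (Inl b') (Inr (b', c', 1))" using cvK[OF bc(3)] bK0[OF bc(3)] by (auto simp: ind_def)
      then show ?thesis using b bc by (auto simp: g_def)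
    next
      case c
      then have False by (auto simp: ind_def split: if_splits)
      then show ?thesis ..
    next
      case d
      then obtain b' c' where bc: "x = Inl b'" "y = Inl c'" "(b', c') \<in> bad (A, le) K1"
        by (auto simp: ind_def split: if_splits)
      have e1: "ind D (x, y) = 1" using d by (auto simp: ind_def split: if_splits)
      have "R k0 (Inr (b', c', 1)) (Inl c')" using cvK[OF bc(3)] bK0[OF bc(3)] by (auto simp: ind_def)
      then show ?thesis using d bc e1 by (auto simp: g_def)
    qed
  qed
  have bw: "R k0 p q \<Longrightarrow> ?R2\<^sup>*\<^sup>* (h p) (h q)" for p q
  proof -
    assume a: "R k0 p q"
    from a consider (a) x y where "p = Inl x" "q = Inl y" "x \<in> A" "y \<in> A" "le x y"
      | (b) x y where "cv x y" "1 \<le> k0 (x, y)" "p = Inl x" "q = Inr (x, y, 1)"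
      | (c) x y i where "cv x y" "1 \<le> i" "i < k0 (x, y)" "p = Inr (x, y, i)" "q = Inr (x, y, Suc i)"
      | (d) x y where "cv x y" "1 \<le> k0 (x, y)" "p = Inr (x, y, k0 (x, y))" "q = Inl y"
      by (simp only: subdiv_base.simps) blast
    then show ?thesis
    proof cases
      case a
      have "(R k1)\<^sup>*\<^sup>* (Inl x) (Inl y)" using a base_Inl by blast
      then have "?R2 (Inl (Inl x)) (Inl (Inl y))" using a by simp
      then show ?thesis using a by (auto simp: h_def)
    next
      case b
      have xK0: "(x, y) \<in> K0" using b by (auto simp: ind_def split: if_splits)
      show ?thesis
      proof (cases "(x, y) \<in> K1")
        case True
        have "Inr (x, y, 1) \<in> C k1" using True b Ck_Inr_ind by blast
        moreover have "R k1 (Inl x) (Inr (x, y, 1))" using True b by (auto simp: ind_def)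
        ultimately have "?R2 (Inl (Inl x)) (Inl (Inr (x, y, 1)))" using b cvD[OF b(1)] by auto
        then show ?thesis using b True by (auto simp: h_def)
      next
        case False
        then have xb: "(x, y) \<in> bad (A, le) K1" using xK0 by blast
        have "k1 (x, y) = 0" using False by (simp add: ind_def)
        then have "covers (S k1) (Inl x) (Inl y)" using cov_InlInl b by blast
        then have "covers (C k1, (R k1)\<^sup>*\<^sup>*) (Inl x) (Inl y)" by (simp add: subdiv_eq)
        moreover have eD: "ind D (Inl x, Inl y) = 1" using xb by (auto simp: ind_def)
        then have "1 \<le> ind D (Inl x, Inl y)" by simp
        ultimately have "?R2 (Inl (Inl x)) (Inr (Inl x, Inl y, 1))"
          by (rule sb_start)
        then show ?thesis using b False by (auto simp: h_def)
      qed
    next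
      case c
      then have False by (auto simp: ind_def split: if_splits)
      then show ?thesis ..
    next
      case d
      have xK0: "(x, y) \<in> K0" and e1: "k0 (x, y) = 1" using d by (auto simp: ind_def split: if_splits)
      show ?thesis
      proof (cases "(x, y) \<in> K1")
        case True
        have "Inr (x, y, 1) \<in> C k1" using True d Ck_Inr_ind by blast
        moreover have "R k1 (Inr (x, y, 1)) (Inl y)" using True d by (auto simp: ind_def)
        ultimately have "?R2 (Inl (Inr (x, y, 1))) (Inl (Inl y))" using d cvD[OF d(1)] by auto
        then show ?thesis using d True e1 by (auto simp: h_def)
      next
        case False
        then have xb: "(x, y) \<in> bad (A, le) K1" using xK0 by blast
        have "k1 (x, y) = 0" using False by (simp add: ind_def)
        then have "covers (S k1) (Inl x) (Inl y)" using cov_InlInl d by blast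
        then have "covers (C k1, (R k1)\<^sup>*\<^sup>*) (Inl x) (Inl y)" by (simp add: subdiv_eq)
        moreover have eD: "ind D (Inl x, Inl y) = 1" using xb by (auto simp: ind_def)
        then have "1 \<le> ind D (Inl x, Inl y)" by simp
        ultimately have "?R2 (Inr (Inl x, Inl y, ind D (Inl x, Inl y))) (Inl (Inl y))"
          by (rule sb_end)
        then have "?R2 (Inr (Inl x, Inl y, 1)) (Inl (Inl y))" using eD by simp
        then show ?thesis using d False e1 by (auto simp: h_def)
      qed
    qed
  qed
  have rel: "\<forall>z\<in>?CC. \<forall>w\<in>?CC. ?R2\<^sup>*\<^sup>* z w \<longleftrightarrow> (R k0)\<^sup>*\<^sup>* (g z) (g w)"
  proof (intro ballI iffI)
    fix z w assume "?R2\<^sup>*\<^sup>* z w"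
    then show "(R k0)\<^sup>*\<^sup>* (g z) (g w)" using rtr_map[of ?R2 "R k0" g] fw by blast
  next
    fix z w assume zw: "z \<in> ?CC" "w \<in> ?CC" and "(R k0)\<^sup>*\<^sup>* (g z) (g w)"
    then have "?R2\<^sup>*\<^sup>* (h (g z)) (h (g w))" using rtr_map[of "R k0" ?R2 h] bw by blast
    moreover have "h (g z) = z" "h (g w) = w" using g1 zw by blast+
    ultimately show "?R2\<^sup>*\<^sup>* z w" by simp
  qed
  have "poset_iso (?CC, ?R2\<^sup>*\<^sup>*) (C k0, (R k0)\<^sup>*\<^sup>*)"
    by (rule iso_byWitness[OF g1 g2 g3 g4 rel])
  then show ?thesis unfolding SS subdiv_eq .
qed

end

context fposet
begin

lemma K0_finite: "finite K0"
proof -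
  have "K0 \<subseteq> A \<times> A" using K0_cov cvD by fastforce
  then show ?thesis using fin by (meson finite_SigmaI finite_subset)
qed

lemma fstS: "fst (S k) = C k" and sndS: "snd (S k) = (R k)\<^sup>*\<^sup>*"
  by (simp_all add: subdiv_eq)

lemma step_inv:
  assumes iso: "poset_iso Q (S (ind K))" and K: "K \<subseteq> K0" and st: "alg_step Q Q'"
  shows "\<exists>K'. poset_iso Q' (S (ind K')) \<and> K' \<subseteq> K0 \<and> card K' = Suc (card K)"
proof -
  obtain a b c d u where N: "is_N Q a b c d" and u: "u \<notin> fst Q" and Q': "Q' = add_dummy Q b c u"
    using st unfolding alg_step_def by blast
  obtain B le' where Q: "Q = (B, le')" by (cases Q)
  obtain f where f: "bij_betw f B (C (ind K))"
    and r: "\<forall>x\<in>B. \<forall>y\<in>B. le' x y \<longleftrightarrow> (R (ind K))\<^sup>*\<^sup>* (f x) (f y)"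
    and fN: "is_N (S (ind K)) (f a) (f b) (f c) (f d)"
    using iso_N'[OF iso N] unfolding Q fstS sndS by auto
  obtain b' c' where fb: "f b = Inl b'" and fc: "f c = Inl c'" and bad: "(b', c') \<in> bad (A, le) K"
    using N1[OF fN] unfolding supp_ind by blast
  have bcB: "b \<in> B" "c \<in> B" using N unfolding Q is_N_def covers.simps by auto
  have cvbc: "cv b' c'" and nK: "(b', c') \<notin> K" using bad unfolding mem_bad by blast+
  have v: "Inr (b', c', 1) \<notin> C (ind K)" using nK by (simp add: ind_def)
  have "poset_iso (add_dummy (B, le') b c u) (add_dummy (C (ind K), (R (ind K))\<^sup>*\<^sup>*) (f b) (f c) (Inr (b', c', 1)))"
    by (rule iso_add_dummy[OF f r bcB u[unfolded Q fst_conv] v])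
  also have "add_dummy (C (ind K), (R (ind K))\<^sup>*\<^sup>*) (f b) (f c) (Inr (b', c', 1)) = S (ind (insert (b', c') K))"
    using add_dummy_sub[OF cvbc nK] unfolding fb fc subdiv_eq .
  finally have i1: "poset_iso Q' (S (ind (insert (b', c') K)))" unfolding Q' Q .
  have "insert (b', c') K \<subseteq> K0" using K mono_bad1[OF K bad] by blast
  moreover have "card (insert (b', c') K) = Suc (card K)"
    using nK finite_subset[OF K K0_finite] by simp
  ultimately show ?thesis using i1 by blast
qed

lemma no_infinite:
  assumes f0: "f 0 = (A, le)" and st: "\<forall>m. alg_step (f m) (f (Suc m))"
  shows False
proof -
  have "\<exists>K. poset_iso (f m) (S (ind K)) \<and> K \<subseteq> K0 \<and> card K = m" for m
  proof (induction m)
    case 0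
    then show ?case using iso_base f0 by (intro exI[of _ "{}"]) simp
  next
    case (Suc m)
    then obtain K where K: "poset_iso (f m) (S (ind K))" "K \<subseteq> K0" "card K = m" by blast
    have "alg_step (f m) (f (Suc m))" using st by blast
    then obtain K' where "poset_iso (f (Suc m)) (S (ind K'))" "K' \<subseteq> K0" "card K' = Suc (card K)"
      using step_inv[OF K(1) K(2)] by blast
    then show ?case using K(3) by blast
  qed
  then obtain K where K: "K \<subseteq> K0" "card K = Suc (card K0)" by blast
  have "card K \<le> card K0" using card_mono[OF K0_finite K(1)] .
  then show False using K(2) by simp
qed

lemma run_inv:
  assumes run: "complete_run (A, le) Ps"
  shows "i < length Ps \<Longrightarrow> \<exists>K. poset_iso (Ps ! i) (S (ind K)) \<and> K \<subseteq> K0 \<and> card K = i"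
proof (induction i)
  case 0
  have "Ps \<noteq> []" "hd Ps = (A, le)" using run unfolding complete_run_def by blast+
  then have "Ps ! 0 = (A, le)" using hd_conv_nth[of Ps] by argo
  then show ?case using iso_base by (intro exI[of _ "{}"]) simp
next
  case (Suc i)
  then obtain K where K: "poset_iso (Ps ! i) (S (ind K))" "K \<subseteq> K0" "card K = i" by auto
  have "alg_step (Ps ! i) (Ps ! Suc i)" using run Suc(2) unfolding complete_run_def by blast
  then obtain K' where "poset_iso (Ps ! Suc i) (S (ind K'))" "K' \<subseteq> K0" "card K' = Suc (card K)"
    using step_inv[OF K(1) K(2)] by blast
  then show ?case using K(3) by blast
qed

lemma exists_run:
  assumes inf: "infinite (UNIV :: 'a set)"
  shows "\<forall>(Q :: 'a poset) K. K \<subseteq> K0 \<longrightarrow> card K0 - card K = n \<longrightarrow> poset_iso Q (S (ind K)) \<longrightarrow> (\<exists>Ps. complete_run Q Ps)"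
proof (induction n rule: less_induct)
  case (less n)
  show ?case
  proof (intro allI impI)
    fix Q :: "'a poset" and K
    assume K: "K \<subseteq> K0" and n: "card K0 - card K = n" and iso: "poset_iso Q (S (ind K))"
    show "\<exists>Ps. complete_run Q Ps"
    proof (cases "N_free Q")
      case True
      then have "complete_run Q [Q]" unfolding complete_run_def by simp
      then show ?thesis by blast
    next
      case False
      then obtain a b c d where N: "is_N Q a b c d" unfolding N_free_def by blast
      have "finite (fst Q)" using iso_finite[OF iso] C_ind_finite unfolding fstS by blast
      then obtain u where u: "u \<notin> fst Q" using ex_new_if_finite[OF inf] by blast
      define Q' where "Q' = add_dummy Q b c u"
      have st: "alg_step Q Q'" unfolding alg_step_def Q'_def using N u by blast
      obtain K' where K': "poset_iso Q' (S (ind K'))" "K' \<subseteq> K0" "card K' = Suc (card K)"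
        using step_inv[OF iso K st] by blast
      have "card K' \<le> card K0" using card_mono[OF K0_finite K'(2)] .
      then have "card K0 - card K' < n" using n K'(3) by simp
      then obtain Ps' where run': "complete_run Q' Ps'" using less K' by blast
      have "complete_run Q (Q # Ps')"
        unfolding complete_run_def
      proof (intro conjI allI impI)
        show "Q # Ps' \<noteq> []" by simp
        show "hd (Q # Ps') = Q" by simp
        show "N_free (last (Q # Ps'))" using run' unfolding complete_run_def by simp
      next
        fix i assume i: "Suc i < length (Q # Ps')"
        show "alg_step ((Q # Ps') ! i) ((Q # Ps') ! Suc i)"
        proof (cases i)
          case 0
          have "Ps' \<noteq> []" "hd Ps' = Q'" using run' unfolding complete_run_def by blast+
          then have "Ps' ! 0 = Q'" using hd_conv_nth[of Ps'] by argo
          then show ?thesis using 0 st by simp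
        next
          case (Suc j)
          then show ?thesis using i run' unfolding complete_run_def by simp
        qed
      qed
      then show ?thesis by blast
    qed
  qed
qed

end

theorem theorem2:
  fixes P :: "'a poset"
  assumes "infinite (UNIV :: 'a set)"
    and "finite (fst P)"
    and "is_poset P"
  shows "\<not> (\<exists>f :: nat \<Rightarrow> 'a poset. f 0 = P \<and> (\<forall>m. alg_step (f m) (f (Suc m)))) \<and>
         (\<exists>Ps. complete_run P Ps) \<and>
         (\<forall>Ps. complete_run P Ps \<longrightarrow>
           poset_iso (last Ps) (SN (SN P)) \<and>
           length Ps = Suc (card (fst (SN (SN P))) - card (fst P))) \<and>
         (\<exists>k0. poset_iso (SN (SN P)) (subdiv P k0) \<and> N_free (subdiv P k0) \<and>
           (\<forall>k. N_free (subdiv P k) \<longrightarrow> (\<forall>x y. covers P x y \<longrightarrow> k0 (x, y) \<le> k (x, y))))"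
proof -
  obtain A le where P: "P = (A, le)" by (cases P)
  have ip: "(\<forall>x\<in>A. le x x) \<and> (\<forall>x\<in>A. \<forall>y\<in>A. le x y \<and> le y x \<longrightarrow> x = y) \<and>
      (\<forall>x\<in>A. \<forall>y\<in>A. \<forall>z\<in>A. le x y \<and> le y z \<longrightarrow> le x z)"
    using assms(3) unfolding P is_poset.simps .
  have finA: "finite A" using assms(2) unfolding P fst_conv .
  have "fposet A le"
  proof
    show "\<And>x. x \<in> A \<Longrightarrow> le x x" using ip by blast
    show "\<And>x y. x \<in> A \<Longrightarrow> y \<in> A \<Longrightarrow> le x y \<Longrightarrow> le y x \<Longrightarrow> x = y" using ip by blast
    show "\<And>x y z. x \<in> A \<Longrightarrow> y \<in> A \<Longrightarrow> z \<in> A \<Longrightarrow> le x y \<Longrightarrow> le y z \<Longrightarrow> le x z" using ip by blast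
    show "finite A" by (rule finA)
  qed
  then interpret fposet A le .
  have SS: "poset_iso (SN (SN P)) (S k0)" using SNSN P by simp
  have part1: "\<not> (\<exists>f :: nat \<Rightarrow> 'a poset. f 0 = P \<and> (\<forall>m. alg_step (f m) (f (Suc m))))"
  proof
    assume "\<exists>f :: nat \<Rightarrow> 'a poset. f 0 = P \<and> (\<forall>m. alg_step (f m) (f (Suc m)))"
    then obtain f :: "nat \<Rightarrow> 'a poset" where f: "f 0 = (A, le)" "\<forall>m. alg_step (f m) (f (Suc m))"
      unfolding P by blast
    show False by (rule no_infinite[OF f])
  qed
  have e: "\<forall>(Q :: 'a poset) K. K \<subseteq> K0 \<longrightarrow> card K0 - card K = card K0 \<longrightarrow> poset_iso Q (S (ind K)) \<longrightarrow> (\<exists>Ps. complete_run Q Ps)"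
    by (rule exists_run[OF assms(1)])
  have "\<exists>Ps. complete_run (A, le) Ps"
    using e[rule_format, where Q = "(A, le)" and K = "{}"] iso_base by simp
  then have part2: "\<exists>Ps. complete_run P Ps" unfolding P .
  have part3: "poset_iso (last Ps) (SN (SN P)) \<and> length Ps = Suc (card (fst (SN (SN P))) - card (fst P))"
    if run: "complete_run P Ps" for Ps
  proof -
    have ne: "Ps \<noteq> []" using run unfolding complete_run_def by blast
    have r: "complete_run (A, le) Ps" using run unfolding P .
    have "length Ps - 1 < length Ps" using ne by simp
    then obtain K where K: "poset_iso (Ps ! (length Ps - 1)) (S (ind K))" "K \<subseteq> K0" "card K = length Ps - 1"
      using run_inv[OF r] by blast
    have last: "last Ps = Ps ! (length Ps - 1)" using ne by (simp add: last_conv_nth)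
    have "N_free (last Ps)" using run unfolding complete_run_def by blast
    then have "N_free (S (ind K))" using iso_Nfree K(1) last by simp
    then have "bad (A, le) K = {}" using Nfree_sub[of "ind K"] unfolding supp_ind by simp
    then have "K0 \<subseteq> K" by (rule minimal)
    then have KK: "K = K0" using K(2) by blast
    have "poset_iso (last Ps) (S k0)" using K(1) last KK by simp
    then have i1: "poset_iso (last Ps) (SN (SN P))" using iso_trans iso_sym[OF SS] by blast
    have "card (fst (SN (SN P))) = card (C k0)" using iso_card[OF SS] unfolding fstS .
    also have "\<dots> = card A + card K0" using C_ind_card by blast
    finally have "card (fst (SN (SN P))) - card (fst P) = card K0" using P by simp
    then show ?thesis using i1 K(3) KK ne by simp
  qed
  have part4: "\<exists>k0. poset_iso (SN (SN P)) (subdiv P k0) \<and> N_free (subdiv P k0) \<and>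
           (\<forall>k. N_free (subdiv P k) \<longrightarrow> (\<forall>x y. covers P x y \<longrightarrow> k0 (x, y) \<le> k (x, y)))"
  proof (intro exI[of _ k0] conjI allI impI)
    show "poset_iso (SN (SN P)) (subdiv P k0)" using SS P by simp
    show "N_free (subdiv P k0)" using Nfree_sub[of k0] closed P unfolding supp_ind by simp
  next
    fix k x y assume fr: "N_free (subdiv P k)" and "covers P x y"
    have "bad (A, le) {e. 1 \<le> k e} = {}" using fr Nfree_sub P by simp
    then have "K0 \<subseteq> {e. 1 \<le> k e}" by (rule minimal)
    then show "k0 (x, y) \<le> k (x, y)" by (auto simp: ind_def)
  qed
  show ?thesis using part1 part2 part3 part4 by blast
qed

end
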